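(* Let $\lambda\approx1.5214$ be the real root and $\mu\approx-0.761+0.858i$ a complex root of $t^3-t-2$, and put $\sigma=\log_{|\mu|}\lambda\approx3.068$. Let $\mathbf Q=\bigoplus\mathbf Q_{n_1n_2n_3}$ be the $\mathbb N_0^3$-grading of $\mathbf Q=\mathrm{Lie}(v_0,v_1,v_2)$ by multidegree in $v_0,v_1,v_2$. For $(n_1,n_2,n_3)$ put $Y_1=n_1+n_2\lambda+n_3\lambda^2$, $Y_2=\operatorname{Re}(n_1+n_2\mu+n_3\mu^2)$, $Y_3=\operatorname{Im}(n_1+n_2\mu+n_3\mu^2)$. Then for every $(n_1,n_2,n_3)$ with $\mathbf Q_{n_1n_2n_3}\neq0$ (i.e. for the multidegree of every standard monomial of $\mathbf Q$), $$\sqrt{Y_2^2+Y_3^2}<14\,Y_1^{1/\sigma}.$$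
   Context: $\Lambda$ is the Grassmann algebra over a field $K$ on odd generators $x_0,x_1,\dots$; $x_i$ acts by left multiplication; $\partial_i$ is the odd superderivation with $\partial_i(x_j)=\delta_{ij}$; pivot elements $v_i=\sum_{k\ge0}\big(\prod_{n=0}^{k-1}x_{i+3n}x_{i+3n+1}\big)\partial_{i+3k}$. $\mathbf Q$ is the Lie subsuperalgebra of $(\operatorname{End}\Lambda)^{(-)}$ generated by $v_0,v_1,v_2$ (closed under squaring of odd elements in characteristic $2$); $\mathbf Q_{n_1n_2n_3}$ is the span of Lie products with $n_1,n_2,n_3$ occurrences of $v_0,v_1,v_2$. *)

theory Defs
  imports Complex_Main
begin

text \<open>An element of the Grassmann algebra is represented by its coefficient function
  on the standard basis monomials x_S = x_{i1} ... x_{ik} (S = {i1 < ... < ik} finite).\<close>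

type_synonym 'k grass = "nat set \<Rightarrow> 'k"
type_synonym 'k gop = "'k grass \<Rightarrow> 'k grass"

definition Lambda :: "'k::field grass set" where
  "Lambda = {f. finite {S. f S \<noteq> 0} \<and> (\<forall>S. f S \<noteq> 0 \<longrightarrow> finite S)}"

definition gsign :: "nat \<Rightarrow> nat set \<Rightarrow> 'k::field" where
  "gsign i S = (-1) ^ card {j \<in> S. j < i}"

text \<open>Left multiplication by x_i: x_i x_S = (-1)^{#{j in S. j<i}} x_{S+i} if i not in S, else 0.\<close>
definition xmul :: "nat \<Rightarrow> 'k::field gop" where
  "xmul i f = (\<lambda>T. if i \<in> T then gsign i (T - {i}) * f (T - {i}) else 0)"

text \<open>Odd superderivation d_i with d_i(x_j) = delta_ij:
  d_i x_S = (-1)^{#{j in S. j<i}} x_{S-i} if i in S, else 0.\<close>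
definition dder :: "nat \<Rightarrow> 'k::field gop" where
  "dder i f = (\<lambda>T. if i \<notin> T then gsign i T * f (T \<union> {i}) else 0)"

definition pivot_term :: "nat \<Rightarrow> nat \<Rightarrow> 'k::field gop" where
  "pivot_term i k f =
     foldr (\<lambda>n g. xmul (i + 3*n) (xmul (i + 3*n + 1) g)) [0..<k] (dder (i + 3*k) f)"

text \<open>Pivot element v_i = sum_k (prod_{n<k} x_{i+3n} x_{i+3n+1}) d_{i+3k}; on each element of
  Lambda only finitely many summands are nonzero (those with d_{i+3k} f \<noteq> 0).\<close>
definition pivot :: "nat \<Rightarrow> 'k::field gop" where
  "pivot i f = (\<lambda>T. \<Sum>k\<in>{k. dder (i + 3*k) f \<noteq> (\<lambda>T. 0)}. pivot_term i k f T)"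

text \<open>Triples (operator, multidegree (n1,n2,n3), odd?) for Lie products in the generators
  v_0, v_1, v_2 of the Lie superalgebra (End Lambda)^(-); superbracket
  [a,b] = ab - (-1)^{|a||b|} ba; in characteristic 2 also squares of odd elements.\<close>

definition deg_unit :: "nat \<Rightarrow> nat \<times> nat \<times> nat" where
  "deg_unit i = (if i = 0 then (1,0,0) else if i = 1 then (0,1,0) else (0,0,1))"

definition deg_add :: "nat \<times> nat \<times> nat \<Rightarrow> nat \<times> nat \<times> nat \<Rightarrow> nat \<times> nat \<times> nat" where
  "deg_add d e = (case d of (a1,a2,a3) \<Rightarrow> case e of (b1,b2,b3) \<Rightarrow> (a1+b1, a2+b2, a3+b3))"

definition superbracket :: "'k::field gop \<Rightarrow> bool \<Rightarrow> 'k gop \<Rightarrow> bool \<Rightarrow> 'k gop" where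
  "superbracket a pa b pb =
     (\<lambda>f. if pa \<and> pb then (\<lambda>T. a (b f) T + b (a f) T) else (\<lambda>T. a (b f) T - b (a f) T))"

inductive_set lie_prod :: "('k::field gop \<times> (nat \<times> nat \<times> nat) \<times> bool) set" where
  gen: "i < 3 \<Longrightarrow> (pivot i, deg_unit i, True) \<in> lie_prod"
| brk: "(a, da, pa) \<in> lie_prod \<Longrightarrow> (b, db, pb) \<in> lie_prod \<Longrightarrow>
        (superbracket a pa b pb, deg_add da db, pa \<noteq> pb) \<in> lie_prod"
| sq: "(2::'k) = 0 \<Longrightarrow> (a, d, True) \<in> lie_prod \<Longrightarrow>
        ((\<lambda>f. a (a f)), deg_add d d, False) \<in> lie_prod"

inductive_set Qcomp :: "nat \<times> nat \<times> nat \<Rightarrow> 'k::field gop set" for n where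
  zero: "(\<lambda>f T. 0) \<in> Qcomp n"
| prod: "(a, n, p) \<in> lie_prod \<Longrightarrow> a \<in> Qcomp n"
| add: "a \<in> Qcomp n \<Longrightarrow> b \<in> Qcomp n \<Longrightarrow> (\<lambda>f T. a f T + b f T) \<in> Qcomp n"
| smult: "a \<in> Qcomp n \<Longrightarrow> (\<lambda>f T. c * a f T) \<in> Qcomp n"

definition Qcomp_nonzero :: "'k::field itself \<Rightarrow> nat \<times> nat \<times> nat \<Rightarrow> bool" where
  "Qcomp_nonzero TYPE('k) n = (\<exists>a \<in> (Qcomp n :: 'k gop set). \<exists>f \<in> Lambda. a f \<noteq> (\<lambda>T. 0))"

definition lam :: real where
  "lam = (THE t. t ^ 3 - t - 2 = 0)"

definition mu :: complex where
  "mu = (THE z. z ^ 3 - z - 2 = 0 \<and> Im z > 0)"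

definition sigma :: real where
  "sigma = log (cmod mu) lam"

end

theory Submission
  imports Defs
begin


definition supp :: "'k::field grass \<Rightarrow> nat set set" where
  "supp f = {S. f S \<noteq> 0}"

definition dl :: "nat set \<Rightarrow> 'k::field grass" where
  "dl X = (\<lambda>S. if S = X then 1 else 0)"

definition sg :: "bool \<Rightarrow> 'k::field" where
  "sg b = (if b then -1 else 1)"

definition hom :: "bool \<Rightarrow> 'k::field grass \<Rightarrow> bool" where
  "hom q f \<longleftrightarrow> (\<forall>S. f S \<noteq> 0 \<longrightarrow> odd (card S) = q)"

definition invc :: "nat set \<Rightarrow> nat set \<Rightarrow> nat" where
  "invc A B = (\<Sum>a\<in>A. card {b\<in>B. b < a})"

definition ms :: "nat set \<Rightarrow> nat set \<Rightarrow> 'k::field" where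
  "ms A B = (-1) ^ invc A B"

definition gmul :: "'k::field grass \<Rightarrow> 'k grass \<Rightarrow> 'k grass" where
  "gmul f g = (\<lambda>T. \<Sum>A\<in>Pow T. ms A (T - A) * f A * g (T - A))"

lemma fin_less: "finite {b\<in>B. b < (a::nat)}"
  by (rule finite_subset[of _ "{..<a}"]) auto

lemma card_less_Un: "A \<inter> B = {} \<Longrightarrow> card {x\<in>A \<union> B. x < (j::nat)} = card {x\<in>A. x < j} + card {x\<in>B. x < j}"
proof -
  assume d: "A \<inter> B = {}"
  have "{x\<in>A \<union> B. x < j} = {x\<in>A. x < j} \<union> {x\<in>B. x < j}" by auto
  moreover have "{x\<in>A. x < j} \<inter> {x\<in>B. x < j} = {}" using d by auto
  ultimately show ?thesis using card_Un_disjoint[OF fin_less fin_less] by simp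
qed

lemma gsign_Un: "A \<inter> B = {} \<Longrightarrow> gsign j (A \<union> B) = (gsign j A * gsign j B :: 'k::field)"
  by (simp only: gsign_def card_less_Un power_add)

lemma m1_sq: "((-1::'k::field) ^ n) * (-1) ^ n = 1"
  by (simp add: power_add[symmetric] flip: mult_2)

lemma gsign_sq: "gsign j A * gsign j A = (1::'k::field)"
  unfolding gsign_def by (rule m1_sq)

lemma invc_insert_left: "finite A \<Longrightarrow> a \<notin> A \<Longrightarrow> invc (insert a A) B = card {b\<in>B. b < a} + invc A B"
  unfolding invc_def by simp

lemma ms_insert_left: "finite A \<Longrightarrow> a \<notin> A \<Longrightarrow> ms (insert a A) B = (gsign a B * ms A B :: 'k::field)"
  unfolding ms_def gsign_def by (simp add: invc_insert_left power_add)

lemma invc_insert_right: "finite A \<Longrightarrow> a \<notin> B \<Longrightarrow> invc A (insert a B) = card {x\<in>A. a < x} + invc A B"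
proof -
  assume f: "finite A" and n: "a \<notin> B"
  have "\<And>x. card {b\<in>insert a B. b < x} = (if a < x then 1 else 0) + card {b\<in>B. b < x}"
  proof -
    fix x
    show "card {b\<in>insert a B. b < x} = (if a < x then 1 else 0) + card {b\<in>B. b < x}"
    proof (cases "a < x")
      case True
      then have "{b\<in>insert a B. b < x} = insert a {b\<in>B. b < x}" by auto
      then show ?thesis using True n fin_less[of B x] by simp
    next
      case False
      then have "{b\<in>insert a B. b < x} = {b\<in>B. b < x}" by auto
      then show ?thesis using False by simp
    qed
  qed
  then have "invc A (insert a B) = (\<Sum>x\<in>A. (if a < x then 1 else 0)) + invc A B"
    unfolding invc_def by (simp add: sum.distrib)
  moreover have "(\<Sum>x\<in>A. (if a < x then 1 else 0::nat)) = card {x\<in>A. a < x}"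
    using f by (simp add: sum.If_cases Int_def)
  ultimately show ?thesis by simp
qed

lemma ms_insert_right: "finite A \<Longrightarrow> a \<notin> B \<Longrightarrow> ms A (insert a B) = ((-1) ^ card {x\<in>A. a < x} * ms A B :: 'k::field)"
  unfolding ms_def by (simp add: invc_insert_right power_add)

lemma ms_empty_right[simp]: "ms A {} = 1"
  unfolding ms_def invc_def by simp

lemma ms_empty_left[simp]: "ms {} B = 1"
  unfolding ms_def invc_def by simp

lemma card_split_less: "finite A \<Longrightarrow> (j::nat) \<notin> A \<Longrightarrow> card {x\<in>A. x < j} + card {x\<in>A. j < x} = card A"
proof -
  assume f: "finite A" and n: "j \<notin> A"
  have "A = {x\<in>A. x < j} \<union> {x\<in>A. j < x}" using n by (auto simp: not_less_iff_gr_or_eq)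
  moreover have "{x\<in>A. x < j} \<inter> {x\<in>A. j < x} = {}" by auto
  ultimately show ?thesis using f card_Un_disjoint[of "{x\<in>A. x < j}" "{x\<in>A. j < x}"]
    by (metis (no_types, lifting) finite_Un)
qed

lemma sign_split: "finite A \<Longrightarrow> (j::nat) \<notin> A \<Longrightarrow>
   gsign j A * (-1) ^ card {x\<in>A. j < x} = ((-1) ^ card A :: 'k::field)"
  unfolding gsign_def by (simp add: power_add[symmetric] card_split_less)

lemma hom_sign: "hom q f \<Longrightarrow> f S \<noteq> 0 \<Longrightarrow> (-1) ^ card S = (sg q :: 'k::field)"
  unfolding hom_def sg_def by (auto simp: neg_one_even_power neg_one_odd_power)

lemma sum_Pow_insert:
  assumes "finite T" "a \<notin> T"
  shows "(\<Sum>A\<in>Pow (insert a T). h A) = (\<Sum>A\<in>Pow T. h A) + (\<Sum>A\<in>Pow T. h (insert a A))"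
proof -
  have d: "Pow T \<inter> insert a ` Pow T = {}" using assms by auto
  have i: "inj_on (insert a) (Pow T)" using assms unfolding inj_on_def by (metis PowD insert_ident subset_iff)
  have "(\<Sum>A\<in>Pow (insert a T). h A) = (\<Sum>A\<in>Pow T. h A) + (\<Sum>A\<in>insert a ` Pow T. h A)"
    unfolding Pow_insert using assms d by (intro sum.union_disjoint) auto
  also have "(\<Sum>A\<in>insert a ` Pow T. h A) = (\<Sum>A\<in>Pow T. h (insert a A))"
    using sum.reindex[OF i] by simp
  finally show ?thesis .
qed

lemma gmul_infinite: "infinite T \<Longrightarrow> gmul f g T = 0"
  unfolding gmul_def by simp

lemma L1: "xmul a (gmul u g) T = gmul (xmul a u) g T"
proof (cases "finite T")
  case False
  then show ?thesis by (simp add: xmul_def gmul_infinite)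
next
  case fin: True
  show ?thesis
  proof (cases "a \<in> T")
    case False
    then have "\<And>A. A \<in> Pow T \<Longrightarrow> xmul a u A = 0" unfolding xmul_def by auto
    then show ?thesis using False unfolding gmul_def by (simp add: xmul_def)
  next
    case True
    define T0 where "T0 = T - {a}"
    have T: "T = insert a T0" "a \<notin> T0" "finite T0" using True fin unfolding T0_def by auto
    have "gmul (xmul a u) g T = (\<Sum>A\<in>Pow T0. ms A (T - A) * xmul a u A * g (T - A))
        + (\<Sum>A\<in>Pow T0. ms (insert a A) (T - insert a A) * xmul a u (insert a A) * g (T - insert a A))"
      unfolding gmul_def by (subst T(1), subst sum_Pow_insert[OF T(3,2)]) (simp only: T(1)[symmetric])
    also have "(\<Sum>A\<in>Pow T0. ms A (T - A) * xmul a u A * g (T - A)) = 0"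
      using T by (intro sum.neutral) (auto simp: xmul_def)
    also have "(\<Sum>A\<in>Pow T0. ms (insert a A) (T - insert a A) * xmul a u (insert a A) * g (T - insert a A))
       = (\<Sum>A\<in>Pow T0. gsign a T0 * (ms A (T0 - A) * u A * g (T0 - A)))"
    proof (rule sum.cong[OF refl])
      fix A assume A: "A \<in> Pow T0"
      have fA: "finite A" "a \<notin> A" using A T finite_subset by auto
      have e1: "T - insert a A = T0 - A" using T by auto
      have e2: "insert a A - {a} = A" using fA by auto
      have g: "gsign a T0 = (gsign a A * gsign a (T0 - A) :: 'a)"
        using gsign_Un[of A "T0 - A" a] A by (metis Diff_disjoint Diff_partition PowD)
      have "ms (insert a A) (T0 - A) = gsign a (T0 - A) * (ms A (T0 - A) :: 'a)"
        by (rule ms_insert_left[OF fA])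
      then show "ms (insert a A) (T - insert a A) * xmul a u (insert a A) * g (T - insert a A)
          = gsign a T0 * (ms A (T0 - A) * u A * g (T0 - A))"
        unfolding e1 xmul_def using e2 g by simp
    qed
    also have "\<dots> = xmul a (gmul u g) T"
      unfolding xmul_def gmul_def using T by (simp add: sum_distrib_left)
    finally show ?thesis by simp
  qed
qed


lemma L2:
  assumes h: "hom q f"
  shows "xmul a (gmul f w) T = sg q * gmul f (xmul a w) T"
proof (cases "finite T")
  case False
  then show ?thesis by (simp add: xmul_def gmul_infinite)
next
  case fin: True
  show ?thesis
  proof (cases "a \<in> T")
    case False
    then have "\<And>A. A \<in> Pow T \<Longrightarrow> xmul a w (T - A) = 0" unfolding xmul_def by auto
    then show ?thesis using False unfolding gmul_def by (simp add: xmul_def)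
  next
    case True
    define T0 where "T0 = T - {a}"
    have T: "T = insert a T0" "a \<notin> T0" "finite T0" using True fin unfolding T0_def by auto
    have "gmul f (xmul a w) T = (\<Sum>A\<in>Pow T0. ms A (T - A) * f A * xmul a w (T - A))
        + (\<Sum>A\<in>Pow T0. ms (insert a A) (T - insert a A) * f (insert a A) * xmul a w (T - insert a A))"
      unfolding gmul_def by (subst T(1), subst sum_Pow_insert[OF T(3,2)]) (simp only: T(1)[symmetric])
    also have "(\<Sum>A\<in>Pow T0. ms (insert a A) (T - insert a A) * f (insert a A) * xmul a w (T - insert a A)) = 0"
      using T by (intro sum.neutral) (auto simp: xmul_def)
    also have "(\<Sum>A\<in>Pow T0. ms A (T - A) * f A * xmul a w (T - A))
       = (\<Sum>A\<in>Pow T0. sg q * (gsign a T0 * (ms A (T0 - A) * f A * w (T0 - A))))"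
    proof (rule sum.cong[OF refl])
      fix A assume A: "A \<in> Pow T0"
      have fA: "finite A" "a \<notin> A" using A T finite_subset by auto
      have e1: "T - A = insert a (T0 - A)" "a \<notin> T0 - A" "insert a (T0 - A) - {a} = T0 - A" using T fA by auto
      have g: "gsign a T0 = (gsign a A * gsign a (T0 - A) :: 'a)"
        using gsign_Un[of A "T0 - A" a] A by (metis Diff_disjoint Diff_partition PowD)
      have m: "ms A (insert a (T0 - A)) = (-1) ^ card {x\<in>A. a < x} * (ms A (T0 - A) :: 'a)"
        by (rule ms_insert_right[OF fA(1) e1(2)])
      show "ms A (T - A) * f A * xmul a w (T - A) = sg q * (gsign a T0 * (ms A (T0 - A) * f A * w (T0 - A)))"
      proof (cases "f A = 0")
        case True then show ?thesis by simp
      next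
        case False
        have s: "sg q = gsign a A * (-1) ^ card {x\<in>A. a < x}"
          using hom_sign[OF h False] sign_split[OF fA] by metis
        have ss: "sg q * gsign a A = (-1) ^ card {x\<in>A. a < x} * (1::'a)"
          unfolding s using gsign_sq[of a A] by (simp add: algebra_simps)
        show ?thesis unfolding e1(1) xmul_def using e1 m g
          by (simp add: algebra_simps ss[simplified algebra_simps])
      qed
    qed
    also have "\<dots> = sg q * xmul a (gmul f w) T"
      unfolding xmul_def gmul_def using T by (simp add: sum_distrib_left)
    finally have "gmul f (xmul a w) T = sg q * xmul a (gmul f w) T" by simp
    then show ?thesis by (simp add: sg_def)
  qed
qed


lemma L3:
  assumes h: "hom q f"
  shows "dder j (gmul f g) T = gmul (dder j f) g T + sg q * gmul f (dder j g) T"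
proof (cases "finite T")
  case False
  then show ?thesis by (simp add: dder_def gmul_infinite)
next
  case fin: True
  show ?thesis
  proof (cases "j \<in> T")
    case False
    have T: "finite T" "j \<notin> T" using False fin by auto
    have "dder j (gmul f g) T = gsign j T * gmul f g (insert j T)"
      using False by (simp add: dder_def)
    also have "gmul f g (insert j T) = (\<Sum>A\<in>Pow T. ms A (insert j T - A) * f A * g (insert j T - A))
        + (\<Sum>A\<in>Pow T. ms (insert j A) (insert j T - insert j A) * f (insert j A) * g (insert j T - insert j A))"
      unfolding gmul_def by (rule sum_Pow_insert[OF T])
    also have "gsign j T * ((\<Sum>A\<in>Pow T. ms A (insert j T - A) * f A * g (insert j T - A))
        + (\<Sum>A\<in>Pow T. ms (insert j A) (insert j T - insert j A) * f (insert j A) * g (insert j T - insert j A)))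
      = sg q * gmul f (dder j g) T + gmul (dder j f) g T"
    proof -
      have 1: "gsign j T * (\<Sum>A\<in>Pow T. ms A (insert j T - A) * f A * g (insert j T - A))
            = sg q * gmul f (dder j g) T"
        unfolding gmul_def sum_distrib_left
      proof (rule sum.cong[OF refl])
        fix A assume A: "A \<in> Pow T"
        have fA: "finite A" "j \<notin> A" using A T finite_subset by auto
        have e: "insert j T - A = insert j (T - A)" "j \<notin> T - A" using fA T by auto
        have gT: "gsign j T = (gsign j A * gsign j (T - A) :: 'a)"
          using gsign_Un[of A "T - A" j] A by (metis Diff_disjoint Diff_partition PowD)
        have m: "ms A (insert j (T - A)) = (-1) ^ card {x\<in>A. j < x} * (ms A (T - A) :: 'a)"
          by (rule ms_insert_right[OF fA(1) e(2)])
        show "gsign j T * (ms A (insert j T - A) * f A * g (insert j T - A)) =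
              sg q * (ms A (T - A) * f A * dder j g (T - A))"
        proof (cases "f A = 0")
          case True then show ?thesis by simp
        next
          case False
          have s: "sg q = gsign j A * (-1) ^ card {x\<in>A. j < x}"
            using hom_sign[OF h False] sign_split[OF fA] by metis
          show ?thesis unfolding e dder_def s using e(2) m gT by (simp add: algebra_simps)
        qed
      qed
      have 2: "gsign j T * (\<Sum>A\<in>Pow T. ms (insert j A) (insert j T - insert j A) * f (insert j A) * g (insert j T - insert j A))
            = gmul (dder j f) g T"
        unfolding gmul_def sum_distrib_left
      proof (rule sum.cong[OF refl])
        fix A assume A: "A \<in> Pow T"
        have fA: "finite A" "j \<notin> A" using A T finite_subset by auto
        have e: "insert j T - insert j A = T - A" using fA T by auto
        have gT: "gsign j T = (gsign j A * gsign j (T - A) :: 'a)"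
          using gsign_Un[of A "T - A" j] A by (metis Diff_disjoint Diff_partition PowD)
        have m: "ms (insert j A) (T - A) = gsign j (T - A) * (ms A (T - A) :: 'a)"
          by (rule ms_insert_left[OF fA])
        have sq: "gsign j (T - A) * gsign j (T - A) = (1::'a)" by (rule gsign_sq)
        show "gsign j T * (ms (insert j A) (insert j T - insert j A) * f (insert j A) * g (insert j T - insert j A)) =
              ms A (T - A) * dder j f A * g (T - A)"
          unfolding e dder_def m gT using fA(2)
          by (simp add: algebra_simps) (metis (no_types, lifting) mult.assoc mult.left_commute mult_1 sq)
      qed
      show ?thesis unfolding distrib_left 1 2 by (rule refl)
    qed
    finally show ?thesis by simp
  next
    case True
    define T0 where "T0 = T - {j}"
    have T: "T = insert j T0" "j \<notin> T0" "finite T0" using True fin unfolding T0_def by auto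
    have L: "dder j (gmul f g) T = 0" using True by (simp add: dder_def)
    have r1: "gmul (dder j f) g T = (\<Sum>A\<in>Pow T0. ms A (T - A) * dder j f A * g (T - A))
        + (\<Sum>A\<in>Pow T0. ms (insert j A) (T - insert j A) * dder j f (insert j A) * g (T - insert j A))"
      unfolding gmul_def by (subst T(1), subst sum_Pow_insert[OF T(3,2)]) (simp only: T(1)[symmetric])
    have r1b: "(\<Sum>A\<in>Pow T0. ms (insert j A) (T - insert j A) * dder j f (insert j A) * g (T - insert j A)) = 0"
      by (intro sum.neutral) (auto simp: dder_def)
    have r2: "gmul f (dder j g) T = (\<Sum>A\<in>Pow T0. ms A (T - A) * f A * dder j g (T - A))
        + (\<Sum>A\<in>Pow T0. ms (insert j A) (T - insert j A) * f (insert j A) * dder j g (T - insert j A))"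
      unfolding gmul_def by (subst T(1), subst sum_Pow_insert[OF T(3,2)]) (simp only: T(1)[symmetric])
    have r2a: "(\<Sum>A\<in>Pow T0. ms A (T - A) * f A * dder j g (T - A)) = 0"
      using T by (intro sum.neutral) (auto simp: dder_def)
    have "(\<Sum>A\<in>Pow T0. ms A (T - A) * dder j f A * g (T - A)) +
          sg q * (\<Sum>A\<in>Pow T0. ms (insert j A) (T - insert j A) * f (insert j A) * dder j g (T - insert j A)) = 0"
      unfolding sum_distrib_left sum.distrib[symmetric]
    proof (rule sum.neutral, rule ballI)
      fix A assume A: "A \<in> Pow T0"
      have fA: "finite A" "j \<notin> A" using A T finite_subset by auto
      have e: "T - A = insert j (T0 - A)" "j \<notin> T0 - A" "T - insert j A = T0 - A" using fA T by auto
      have m1: "ms A (insert j (T0 - A)) = (-1) ^ card {x\<in>A. j < x} * (ms A (T0 - A) :: 'a)"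
        by (rule ms_insert_right[OF fA(1) e(2)])
      have m2: "ms (insert j A) (T0 - A) = gsign j (T0 - A) * (ms A (T0 - A) :: 'a)"
        by (rule ms_insert_left[OF fA])
      have sq: "gsign j (T0 - A) * gsign j (T0 - A) = (1::'a)" by (rule gsign_sq)
      show "ms A (T - A) * dder j f A * g (T - A) +
         sg q * (ms (insert j A) (T - insert j A) * f (insert j A) * dder j g (T - insert j A)) = 0"
      proof (cases "f (insert j A) = 0")
        case True then show ?thesis by (simp add: dder_def)
      next
        case False
        have c: "card (insert j A) = Suc (card A)" using fA by simp
        have s: "sg q = - ((-1) ^ card A :: 'a)"
          using hom_sign[OF h False] unfolding c by (metis power_Suc mult_minus1)
        have s2: "(gsign j A * (-1) ^ card {x\<in>A. j < x} :: 'a) = (-1) ^ card A" by (rule sign_split[OF fA])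
        have "ms A (T - A) * dder j f A * g (T - A) = (-1) ^ card A * ms A (T0 - A) * f (insert j A) * g (insert j (T0 - A))"
          unfolding e(1) m1 dder_def using fA(2) s2 by (simp add: algebra_simps)
        moreover have "sg q * (ms (insert j A) (T - insert j A) * f (insert j A) * dder j g (T - insert j A))
            = sg q * ms A (T0 - A) * f (insert j A) * g (insert j (T0 - A))"
          unfolding e(3) m2 dder_def using e(2) sq by (simp add: algebra_simps)
        ultimately show ?thesis unfolding s by (simp add: algebra_simps) (metis (no_types, lifting))
      qed
    qed
    then show ?thesis using L r1 r1b r2 r2a by (simp add: algebra_simps)
  qed
qed



lemma Lambda_iff: "f \<in> Lambda \<longleftrightarrow> finite (supp f) \<and> (\<forall>S. f S \<noteq> 0 \<longrightarrow> finite S)"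
  unfolding Lambda_def supp_def by simp

lemma dl_Lambda: "finite X \<Longrightarrow> dl X \<in> Lambda"
proof -
  assume "finite X"
  moreover have "supp (dl X :: 'a::field grass) \<subseteq> {X}" unfolding supp_def dl_def by auto
  ultimately show ?thesis unfolding Lambda_iff by (auto intro: finite_subset simp: dl_def)
qed

lemma gmul_nz: "gmul f g T \<noteq> 0 \<Longrightarrow> finite T \<and> (\<exists>A. A \<subseteq> T \<and> f A \<noteq> 0 \<and> g (T - A) \<noteq> 0)"
proof -
  assume a: "gmul f g T \<noteq> 0"
  then have "finite T" using gmul_infinite by blast
  moreover from a obtain A where "A \<in> Pow T" "ms A (T - A) * f A * g (T - A) \<noteq> 0"
    unfolding gmul_def by (meson sum.not_neutral_contains_not_neutral)
  ultimately show ?thesis by auto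
qed

lemma gmul_Lambda: "f \<in> Lambda \<Longrightarrow> g \<in> Lambda \<Longrightarrow> gmul f g \<in> Lambda"
proof -
  assume f: "f \<in> Lambda" and g: "g \<in> Lambda"
  have "supp (gmul f g) \<subseteq> (\<lambda>(A,B). A \<union> B) ` (supp f \<times> supp g)"
  proof
    fix T assume "T \<in> supp (gmul f g)"
    then obtain A where "A \<subseteq> T" "f A \<noteq> 0" "g (T - A) \<noteq> 0" using gmul_nz unfolding supp_def by blast
    then show "T \<in> (\<lambda>(A,B). A \<union> B) ` (supp f \<times> supp g)" unfolding supp_def
      by (intro image_eqI[of _ _ "(A, T - A)"]) auto
  qed
  moreover have "finite ((\<lambda>(A,B). A \<union> B) ` (supp f \<times> supp g))" using f g unfolding Lambda_iff by auto
  ultimately show ?thesis unfolding Lambda_iff using gmul_nz by (metis finite_subset)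
qed

lemma dder_Lambda: "f \<in> Lambda \<Longrightarrow> dder j f \<in> Lambda"
proof -
  assume f: "f \<in> Lambda"
  have "supp (dder j f) \<subseteq> (\<lambda>S. S - {j}) ` supp f"
  proof
    fix T assume "T \<in> supp (dder j f)"
    then have "j \<notin> T" "f (insert j T) \<noteq> 0" unfolding supp_def dder_def by (auto split: if_splits)
    then show "T \<in> (\<lambda>S. S - {j}) ` supp f" unfolding supp_def by (intro image_eqI[of _ _ "insert j T"]) auto
  qed
  moreover have "\<forall>S. dder j f S \<noteq> 0 \<longrightarrow> finite S" using f unfolding Lambda_iff dder_def
    by (auto split: if_splits)
  ultimately show ?thesis using f unfolding Lambda_iff by (meson finite_imageI finite_subset)
qed

lemma xmul_Lambda: "f \<in> Lambda \<Longrightarrow> xmul j f \<in> Lambda"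
proof -
  assume f: "f \<in> Lambda"
  have "supp (xmul j f) \<subseteq> insert j ` supp f"
  proof
    fix T assume "T \<in> supp (xmul j f)"
    then have "j \<in> T" "f (T - {j}) \<noteq> 0" unfolding supp_def xmul_def by (auto split: if_splits)
    then show "T \<in> insert j ` supp f" unfolding supp_def by (intro image_eqI[of _ _ "T - {j}"]) auto
  qed
  moreover have "\<forall>S. xmul j f S \<noteq> 0 \<longrightarrow> finite S" using f unfolding Lambda_iff xmul_def
    by (auto split: if_splits)
  ultimately show ?thesis using f unfolding Lambda_iff by (meson finite_imageI finite_subset)
qed


lemma hom_gmul: "hom q f \<Longrightarrow> hom r g \<Longrightarrow> hom (q \<noteq> r) (gmul f g)"
  unfolding hom_def
proof (intro allI impI)
  fix T assume hf: "\<forall>S. f S \<noteq> 0 \<longrightarrow> odd (card S) = q" and hg: "\<forall>S. g S \<noteq> 0 \<longrightarrow> odd (card S) = r"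
    and nz: "gmul f g T \<noteq> 0"
  obtain A where A: "finite T" "A \<subseteq> T" "f A \<noteq> 0" "g (T - A) \<noteq> 0" using gmul_nz[OF nz] by blast
  have "card T = card A + card (T - A)" using card_Int_Diff[of T A] A by (simp add: Int_absorb1)
  then show "odd (card T) = (q \<noteq> r)" using hf hg A by auto
qed

lemma hom_dder: "f \<in> Lambda \<Longrightarrow> hom q f \<Longrightarrow> hom (\<not> q) (dder j f)"
  unfolding hom_def
proof (intro allI impI)
  fix T assume L: "f \<in> Lambda" and hf: "\<forall>S. f S \<noteq> 0 \<longrightarrow> odd (card S) = q" and nz: "dder j f T \<noteq> 0"
  then have "j \<notin> T" "f (insert j T) \<noteq> 0" unfolding dder_def by (auto split: if_splits)
  moreover then have "finite T" using L unfolding Lambda_iff by auto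
  ultimately show "odd (card T) = (\<not> q)" using hf by force
qed

lemma hom_xmul: "f \<in> Lambda \<Longrightarrow> hom q f \<Longrightarrow> hom (\<not> q) (xmul j f)"
  unfolding hom_def
proof (intro allI impI)
  fix T assume L: "f \<in> Lambda" and hf: "\<forall>S. f S \<noteq> 0 \<longrightarrow> odd (card S) = q" and nz: "xmul j f T \<noteq> 0"
  then have "j \<in> T" "f (T - {j}) \<noteq> 0" unfolding xmul_def by (auto split: if_splits)
  moreover then have "finite (T - {j})" using L unfolding Lambda_iff by auto
  moreover have "T = insert j (T - {j})" using calculation by auto
  ultimately show "odd (card T) = (\<not> q)" using hf
    by (metis card_insert_disjoint Diff_iff insertI1 even_Suc)
qed

lemma gmul_linL: "gmul (\<lambda>T. c1 * u T + c2 * v T) g T = c1 * gmul u g T + c2 * gmul v g T"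
  unfolding gmul_def by (simp add: sum.distrib sum_distrib_left algebra_simps)

lemma gmul_linR: "gmul f (\<lambda>T. c1 * u T + c2 * v T) T = c1 * gmul f u T + c2 * gmul f v T"
  unfolding gmul_def by (simp add: sum.distrib sum_distrib_left algebra_simps)

lemma gmul_sumL: "gmul (\<lambda>T. \<Sum>k\<in>F. u k T) g T = (\<Sum>k\<in>F. gmul (u k) g T)"
  unfolding gmul_def sum_distrib_left sum_distrib_right by (subst sum.swap) (simp add: algebra_simps)

lemma gmul_sumR: "gmul f (\<lambda>T. \<Sum>k\<in>F. u k T) T = (\<Sum>k\<in>F. gmul f (u k) T)"
  unfolding gmul_def sum_distrib_left sum_distrib_right by (subst sum.swap) (simp add: algebra_simps)

lemma gmul_zeroL: "gmul (\<lambda>T. 0) g T = 0"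
  unfolding gmul_def by simp

lemma gmul_zeroR: "gmul f (\<lambda>T. 0) T = 0"
  unfolding gmul_def by simp

lemma gmul_unitL: "h \<in> Lambda \<Longrightarrow> gmul (dl {}) h T = h T"
proof (cases "finite T")
  case True
  have "gmul (dl {}) h T = (\<Sum>A\<in>Pow T. if A = {} then h T else 0)"
    unfolding gmul_def dl_def by (intro sum.cong) auto
  also have "\<dots> = h T" using True by (simp add: sum.delta)
  finally show ?thesis .
next
  case False
  assume "h \<in> Lambda"
  then show ?thesis using False gmul_infinite unfolding Lambda_iff by metis
qed

lemma gmul_unitR: "h \<in> Lambda \<Longrightarrow> gmul h (dl {}) T = h T"
proof (cases "finite T")
  case True
  have "gmul h (dl {}) T = (\<Sum>A\<in>Pow T. if A = T then h T else 0)"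
    unfolding gmul_def dl_def by (intro sum.cong) auto
  also have "\<dots> = h T" using True by (simp add: sum.delta)
  finally show ?thesis .
next
  case False
  assume "h \<in> Lambda"
  then show ?thesis using False gmul_infinite unfolding Lambda_iff by metis
qed

lemma gmul_dl_dl:
  assumes "finite R" "\<forall>r\<in>R. j < r"
  shows "gmul (dl {j}) (dl R) T = dl (insert j R) T"
proof (cases "T = insert j R")
  case True
  have jR: "j \<notin> R" using assms by auto
  have "gmul (dl {j}) (dl R) T = (\<Sum>A\<in>Pow T. if A = {j} then ms {j} R else 0)"
    unfolding gmul_def dl_def using True jR by (intro sum.cong) auto
  also have "\<dots> = ms {j} R" using True assms by (simp add: sum.delta)
  also have "ms {j} R = (1::'a)"
  proof -
    have e: "{b\<in>R. b < j} = {}" using assms(2) by auto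
    show ?thesis unfolding ms_def invc_def by (simp add: e)
  qed
  finally show ?thesis using True by (simp add: dl_def)
next
  case False
  have "gmul (dl {j}) (dl R) T = 0"
    unfolding gmul_def dl_def using False by (intro sum.neutral) auto
  then show ?thesis using False by (simp add: dl_def)
qed


definition lin :: "'k::field gop \<Rightarrow> bool" where
  "lin a \<longleftrightarrow> (\<forall>f\<in>Lambda. a f \<in> Lambda) \<and>
     (\<forall>f\<in>Lambda. \<forall>g\<in>Lambda. \<forall>c. a (\<lambda>T. f T + c * g T) = (\<lambda>T. a f T + c * a g T))"

definition leib :: "'k::field gop \<Rightarrow> bool \<Rightarrow> bool" where
  "leib a p \<longleftrightarrow> (\<forall>f\<in>Lambda. \<forall>g\<in>Lambda. \<forall>q. hom q f \<longrightarrow>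
      a (gmul f g) = (\<lambda>T. gmul (a f) g T + sg (p \<and> q) * gmul f (a g) T))"

definition parm :: "'k::field gop \<Rightarrow> bool \<Rightarrow> bool" where
  "parm a p \<longleftrightarrow> (\<forall>f\<in>Lambda. \<forall>q. hom q f \<longrightarrow> hom (q \<noteq> p) (a f))"

lemma zero_Lambda: "(\<lambda>T. 0) \<in> Lambda"
  unfolding Lambda_iff supp_def by simp

lemma Lambda_lin: "f \<in> Lambda \<Longrightarrow> g \<in> Lambda \<Longrightarrow> (\<lambda>T. f T + c * g T) \<in> Lambda"
proof -
  assume f: "f \<in> Lambda" and g: "g \<in> Lambda"
  have "supp (\<lambda>T. f T + c * g T) \<subseteq> supp f \<union> supp g" unfolding supp_def by auto
  then show ?thesis using f g unfolding Lambda_iff by (auto intro: finite_subset) (metis mult_zero_right add_0)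
qed

lemma Lambda_scale: "g \<in> Lambda \<Longrightarrow> (\<lambda>T. c * g T) \<in> Lambda"
  using Lambda_lin[OF zero_Lambda, of g c] by simp

lemma Lambda_sum: "finite F \<Longrightarrow> (\<forall>x\<in>F. u x \<in> Lambda) \<Longrightarrow> (\<lambda>T. \<Sum>x\<in>F. c x * u x T) \<in> Lambda"
proof (induction F rule: finite_induct)
  case empty
  then show ?case using zero_Lambda by simp
next
  case (insert x F)
  then have "(\<lambda>T. (\<Sum>y\<in>F. c y * u y T) + c x * u x T) \<in> Lambda"
    by (intro Lambda_lin) auto
  then show ?case using insert by (simp add: add.commute)
qed

lemma lin_Lambda: "lin a \<Longrightarrow> f \<in> Lambda \<Longrightarrow> a f \<in> Lambda"
  unfolding lin_def by blast

lemma lin_lin: "lin a \<Longrightarrow> f \<in> Lambda \<Longrightarrow> g \<in> Lambda \<Longrightarrow> a (\<lambda>T. f T + c * g T) = (\<lambda>T. a f T + c * a g T)"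
  unfolding lin_def by blast

lemma lin_zero: "lin a \<Longrightarrow> a (\<lambda>T. 0) = (\<lambda>T. 0)"
proof -
  assume l: "lin a"
  have "a (\<lambda>T. (0::'a) + 1 * 0) = (\<lambda>T. a (\<lambda>T. 0) T + 1 * a (\<lambda>T. 0) T)"
    using lin_lin[OF l zero_Lambda zero_Lambda] by blast
  then have "\<And>T. a (\<lambda>T. 0) T = a (\<lambda>T. 0) T + a (\<lambda>T. 0) T" by (metis (no_types) mult_1 add_0)
  then have "\<And>T. a (\<lambda>T. 0) T = 0" by (metis add_cancel_right_right)
  then show ?thesis by auto
qed

lemma lin_scale: "lin a \<Longrightarrow> g \<in> Lambda \<Longrightarrow> a (\<lambda>T. c * g T) = (\<lambda>T. c * a g T)"
proof -
  assume l: "lin a" and g: "g \<in> Lambda"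
  have "a (\<lambda>T. 0 + c * g T) = (\<lambda>T. a (\<lambda>T. 0) T + c * a g T)" by (rule lin_lin[OF l zero_Lambda g])
  then show ?thesis using lin_zero[OF l] by simp
qed

lemma lin_sum:
  assumes l: "lin a" and fin: "finite F"
  shows "(\<forall>x\<in>F. u x \<in> Lambda) \<Longrightarrow>
    a (\<lambda>T. \<Sum>x\<in>F. c x * u x T) = (\<lambda>T. \<Sum>x\<in>F. c x * a (u x) T)"
  using fin
proof (induction F rule: finite_induct)
  case empty
  then show ?case using lin_zero[OF l] by simp
next
  case (insert x F)
  have e: "(\<lambda>T. \<Sum>y\<in>insert x F. c y * u y T) = (\<lambda>T. (\<Sum>y\<in>F. c y * u y T) + c x * u x T)"
    using insert by (simp add: add.commute)
  have "a (\<lambda>T. (\<Sum>y\<in>F. c y * u y T) + c x * u x T) = (\<lambda>T. a (\<lambda>T. \<Sum>y\<in>F. c y * u y T) T + c x * a (u x) T)"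
    using insert by (intro lin_lin[OF l] Lambda_sum) auto
  then show ?case unfolding e using insert by (simp add: add.commute)
qed

lemma expand: "f \<in> Lambda \<Longrightarrow> f = (\<lambda>S. \<Sum>T\<in>supp f. f T * dl T S)"
proof
  fix S assume f: "f \<in> Lambda"
  have fin: "finite (supp f)" using f unfolding Lambda_iff by simp
  have "(\<Sum>T\<in>supp f. f T * dl T S) = (\<Sum>T\<in>supp f. if T = S then f S else 0)"
    by (intro sum.cong) (auto simp: dl_def)
  also have "\<dots> = f S" using fin by (simp add: sum.delta' supp_def)
  finally show "f S = (\<Sum>T\<in>supp f. f T * dl T S)" by simp
qed

lemma supp_fin: "f \<in> Lambda \<Longrightarrow> T \<in> supp f \<Longrightarrow> finite T"
  unfolding Lambda_iff supp_def by auto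

lemma lin_nz:
  assumes l: "lin a" and f: "f \<in> Lambda" and nz: "a f S \<noteq> 0"
  shows "\<exists>T\<in>supp f. a (dl T) S \<noteq> 0"
proof -
  have fin: "finite (supp f)" using f unfolding Lambda_iff by simp
  have "a f = a (\<lambda>S. \<Sum>T\<in>supp f. f T * dl T S)" using expand[OF f] by simp
  also have "\<dots> = (\<lambda>S. \<Sum>T\<in>supp f. f T * a (dl T) S)"
    using fin supp_fin[OF f] by (intro lin_sum[OF l fin]) (auto intro: dl_Lambda)
  finally have "(\<Sum>T\<in>supp f. f T * a (dl T) S) \<noteq> 0" using nz by metis
  then obtain T where "T \<in> supp f" "f T * a (dl T) S \<noteq> 0" by (meson sum.not_neutral_contains_not_neutral)
  then show ?thesis by auto
qed

lemma hom_dl: "finite X \<Longrightarrow> hom (odd (card X)) (dl X)"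
  unfolding hom_def dl_def by auto

lemma leib_empty:
  assumes l: "lin a" and d: "leib a p"
  shows "a (dl {}) = (\<lambda>T. 0)"
proof -
  have L: "dl {} \<in> Lambda" by (rule dl_Lambda) simp
  have h: "hom False (dl {} :: 'a grass)" using hom_dl[of "{}"] by simp
  have g: "gmul (dl {}) (dl {}) = (dl {} :: 'a grass)" using gmul_unitL[OF L] by auto
  have "a (gmul (dl {}) (dl {})) = (\<lambda>T. gmul (a (dl {})) (dl {}) T + sg (p \<and> False) * gmul (dl {}) (a (dl {})) T)"
    using d L h unfolding leib_def by blast
  also have "\<dots> = (\<lambda>T. a (dl {}) T + a (dl {}) T)"
    using gmul_unitL[OF lin_Lambda[OF l L]] gmul_unitR[OF lin_Lambda[OF l L]] by (simp add: sg_def)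
  finally have "\<And>T. a (dl {}) T = a (dl {}) T + a (dl {}) T" unfolding g by meson
  then have "\<And>T. a (dl {}) T = 0" by (metis add_cancel_right_right)
  then show ?thesis by auto
qed

lemma dl_insert_min: "finite A \<Longrightarrow> \<forall>x\<in>A. b < x \<Longrightarrow> dl (insert b A) = gmul (dl {b}) (dl A)"
proof -
  assume "finite A" "\<forall>x\<in>A. b < x"
  then have e: "\<And>T. gmul (dl {b}) (dl A) T = dl (insert b A) T" by (rule gmul_dl_dl)
  show ?thesis by (rule ext, rule e[symmetric])
qed

lemma leib_support:
  assumes l: "lin a" and d: "leib a p" and fin: "finite T"
  shows "a (dl T) S \<noteq> 0 \<Longrightarrow> \<exists>j\<in>T. \<exists>S'. a (dl {j}) S' \<noteq> 0 \<and> S' \<inter> (T - {j}) = {} \<and> S = S' \<union> (T - {j})"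
  using fin
proof (induction T arbitrary: S rule: finite_linorder_min_induct)
  case empty
  then show ?case using leib_empty[OF l d] by simp
next
  case (insert b A)
  have LA: "dl A \<in> Lambda" "dl {b} \<in> Lambda" using insert(1) by (auto intro: dl_Lambda)
  have hb: "hom True (dl {b} :: 'a grass)" using hom_dl[of "{b}"] by simp
  have "a (dl (insert b A)) S = gmul (a (dl {b})) (dl A) S + sg (p \<and> True) * gmul (dl {b}) (a (dl A)) S"
  proof -
    have "a (gmul (dl {b}) (dl A)) = (\<lambda>T. gmul (a (dl {b})) (dl A) T + sg (p \<and> True) * gmul (dl {b}) (a (dl A)) T)"
      using d LA hb unfolding leib_def by blast
    then show ?thesis unfolding dl_insert_min[OF insert(1,2)] by meson
  qed
  then consider (x) "gmul (a (dl {b})) (dl A) S \<noteq> 0" | (y) "gmul (dl {b}) (a (dl A)) S \<noteq> 0"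
    using insert(4) by fastforce
  then show ?case
  proof cases
    case x
    then obtain B where B: "B \<subseteq> S" "a (dl {b}) B \<noteq> 0" "dl A (S - B) \<noteq> (0::'a)" using gmul_nz by blast
    then have "S - B = A" by (simp add: dl_def split: if_splits)
    then have "B \<inter> (insert b A - {b}) = {}" "S = B \<union> (insert b A - {b})" using B(1) insert(2) by auto
    then show ?thesis using B by blast
  next
    case y
    then obtain B where B: "B \<subseteq> S" "dl {b} B \<noteq> (0::'a)" "a (dl A) (S - B) \<noteq> 0" using gmul_nz by blast
    then have Bb: "B = {b}" by (simp add: dl_def split: if_splits)
    then obtain j S' where j: "j \<in> A" "a (dl {j}) S' \<noteq> 0" "S' \<inter> (A - {j}) = {}" "S - {b} = S' \<union> (A - {j})"
      using insert(3)[of "S - {b}"] B by blast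
    have bS: "b \<in> S" using B Bb by auto
    have "b \<notin> S'" using j(4) by auto
    moreover have "b \<noteq> j" using j(1) insert(2) by auto
    ultimately have "S' \<inter> (insert b A - {j}) = {}" "S = S' \<union> (insert b A - {j})" using j bS by auto
    then show ?thesis using j by blast
  qed
qed

lemma leib_nonzero:
  assumes l: "lin a" and d: "leib a p" and f: "f \<in> Lambda" and nz: "a f \<noteq> (\<lambda>T. 0)"
  shows "\<exists>j S. a (dl {j}) S \<noteq> 0"
proof -
  obtain S where "a f S \<noteq> 0" using nz by auto
  then obtain T where T: "T \<in> supp f" "a (dl T) S \<noteq> 0" using lin_nz[OF l f] by blast
  then show ?thesis using leib_support[OF l d supp_fin[OF f T(1)] T(2)] by blast
qed


definition brk :: "'k::field gop \<Rightarrow> 'k gop \<Rightarrow> 'k \<Rightarrow> 'k gop" where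
  "brk a b c = (\<lambda>f T. a (b f) T + c * b (a f) T)"

lemma sb_brk: "superbracket a pa b pb = brk a b (- sg (pa \<and> pb))"
  unfolding superbracket_def brk_def sg_def by (intro ext) auto

lemma lin_comp: "lin a \<Longrightarrow> lin b \<Longrightarrow> lin (\<lambda>f. a (b f))"
  unfolding lin_def by simp

lemma lin_brk:
  assumes a: "lin a" and b: "lin b"
  shows "lin (brk a b c)"
  unfolding lin_def
proof (intro conjI ballI allI)
  fix f :: "'a grass" assume f: "f \<in> Lambda"
  show "brk a b c f \<in> Lambda" unfolding brk_def
    using f a b by (intro Lambda_lin lin_Lambda[OF a] lin_Lambda[OF b]) (auto intro: lin_Lambda)
next
  fix f g :: "'a grass" and d :: 'a assume f: "f \<in> Lambda" and g: "g \<in> Lambda"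
  have 1: "b (\<lambda>T. f T + d * g T) = (\<lambda>T. b f T + d * b g T)" by (rule lin_lin[OF b f g])
  have 2: "a (\<lambda>T. f T + d * g T) = (\<lambda>T. a f T + d * a g T)" by (rule lin_lin[OF a f g])
  have 3: "a (\<lambda>T. b f T + d * b g T) = (\<lambda>T. a (b f) T + d * a (b g) T)"
    by (rule lin_lin[OF a lin_Lambda[OF b f] lin_Lambda[OF b g]])
  have 4: "b (\<lambda>T. a f T + d * a g T) = (\<lambda>T. b (a f) T + d * b (a g) T)"
    by (rule lin_lin[OF b lin_Lambda[OF a f] lin_Lambda[OF a g]])
  show "brk a b c (\<lambda>T. f T + d * g T) = (\<lambda>T. brk a b c f T + d * brk a b c g T)"
    unfolding brk_def 1 2 3 4 by (simp add: algebra_simps)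
qed

lemma hom_lin: "hom r u \<Longrightarrow> hom r v \<Longrightarrow> hom r (\<lambda>T. u T + c * v T)"
  unfolding hom_def by (metis add.right_neutral mult_zero_right)

lemma parm_comp: "lin b \<Longrightarrow> parm a pa \<Longrightarrow> parm b pb \<Longrightarrow> parm (\<lambda>f. a (b f)) (pa \<noteq> pb)"
  unfolding parm_def
proof (intro ballI allI impI)
  fix f :: "'a grass" and q assume l: "lin b" and a: "\<forall>f\<in>Lambda. \<forall>q. hom q f \<longrightarrow> hom (q \<noteq> pa) (a f)"
    and b: "\<forall>f\<in>Lambda. \<forall>q. hom q f \<longrightarrow> hom (q \<noteq> pb) (b f)" and f: "f \<in> Lambda" and h: "hom q f"
  have "hom (q \<noteq> pb) (b f)" using b f h by blast
  then have "hom ((q \<noteq> pb) \<noteq> pa) (a (b f))" using a lin_Lambda[OF l f] by blast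
  moreover have "((q \<noteq> pb) \<noteq> pa) = (q \<noteq> (pa \<noteq> pb))" by auto
  ultimately show "hom (q \<noteq> (pa \<noteq> pb)) (a (b f))" by simp
qed

lemma parm_brk: "lin a \<Longrightarrow> lin b \<Longrightarrow> parm a pa \<Longrightarrow> parm b pb \<Longrightarrow> parm (brk a b c) (pa \<noteq> pb)"
proof -
  assume la: "lin a" and lb: "lin b" and pa: "parm a pa" and pb: "parm b pb"
  have 1: "parm (\<lambda>f. a (b f)) (pa \<noteq> pb)" by (rule parm_comp[OF lb pa pb])
  have 2: "parm (\<lambda>f. b (a f)) (pb \<noteq> pa)" by (rule parm_comp[OF la pb pa])
  show ?thesis unfolding parm_def brk_def
  proof (intro ballI allI impI)
    fix f :: "'a grass" and q assume f: "f \<in> Lambda" and h: "hom q f"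
    have "hom (q \<noteq> (pa \<noteq> pb)) (a (b f))" using 1 f h unfolding parm_def by blast
    moreover have "hom (q \<noteq> (pb \<noteq> pa)) (b (a f))" using 2 f h unfolding parm_def by blast
    note x = this
    have e: "(q \<noteq> (pb \<noteq> pa)) = (q \<noteq> (pa \<noteq> pb))" by auto
    have "hom (q \<noteq> (pa \<noteq> pb)) (b (a f))" using x unfolding e .
    ultimately show "hom (q \<noteq> (pa \<noteq> pb)) (\<lambda>T. a (b f) T + c * b (a f) T)"
      by (metis hom_lin)
  qed
qed

lemma leibD: "leib a p \<Longrightarrow> f \<in> Lambda \<Longrightarrow> g \<in> Lambda \<Longrightarrow> hom q f \<Longrightarrow>
   a (gmul f g) T = gmul (a f) g T + sg (p \<and> q) * gmul f (a g) T"
  unfolding leib_def by metis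

lemma parmD: "parm a p \<Longrightarrow> f \<in> Lambda \<Longrightarrow> hom q f \<Longrightarrow> hom (q \<noteq> p) (a f)"
  unfolding parm_def by blast

lemma leib_brk:
  assumes la: "lin a" and lb: "lin b" and pa: "parm a pa" and pb: "parm b pb"
    and da: "leib a pa" and db: "leib b pb"
  shows "leib (brk a b (- sg (pa \<and> pb))) (pa \<noteq> pb)"
  unfolding leib_def
proof (intro ballI allI impI ext)
  fix f g :: "'a grass" and q T assume f: "f \<in> Lambda" and g: "g \<in> Lambda" and h: "hom q f"
  define c :: 'a where "c = - sg (pa \<and> pb)"
  have Lbf: "b f \<in> Lambda" "b g \<in> Lambda" "a f \<in> Lambda" "a g \<in> Lambda"
    using lin_Lambda la lb f g by auto
  have hbf: "hom (q \<noteq> pb) (b f)" "hom (q \<noteq> pa) (a f)" using parmD pa pb f h by auto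
  have B: "b (gmul f g) = (\<lambda>T. gmul (b f) g T + sg (pb \<and> q) * gmul f (b g) T)"
    using leibD[OF db f g h] by auto
  have A: "a (gmul f g) = (\<lambda>T. gmul (a f) g T + sg (pa \<and> q) * gmul f (a g) T)"
    using leibD[OF da f g h] by auto
  have AB: "a (b (gmul f g)) T = gmul (a (b f)) g T + sg (pa \<and> (q \<noteq> pb)) * gmul (b f) (a g) T
     + sg (pb \<and> q) * (gmul (a f) (b g) T + sg (pa \<and> q) * gmul f (a (b g)) T)"
  proof -
    have "a (b (gmul f g)) = (\<lambda>T. a (gmul (b f) g) T + sg (pb \<and> q) * a (gmul f (b g)) T)"
      unfolding B by (rule lin_lin[OF la gmul_Lambda[OF Lbf(1) g] gmul_Lambda[OF f Lbf(2)]])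
    then show ?thesis using leibD[OF da Lbf(1) g hbf(1)] leibD[OF da f Lbf(2) h] by simp
  qed
  have BA: "b (a (gmul f g)) T = gmul (b (a f)) g T + sg (pb \<and> (q \<noteq> pa)) * gmul (a f) (b g) T
     + sg (pa \<and> q) * (gmul (b f) (a g) T + sg (pb \<and> q) * gmul f (b (a g)) T)"
  proof -
    have "b (a (gmul f g)) = (\<lambda>T. b (gmul (a f) g) T + sg (pa \<and> q) * b (gmul f (a g)) T)"
      unfolding A by (rule lin_lin[OF lb gmul_Lambda[OF Lbf(3) g] gmul_Lambda[OF f Lbf(4)]])
    then show ?thesis using leibD[OF db Lbf(3) g hbf(2)] leibD[OF db f Lbf(4) h] by simp
  qed
  have G1: "gmul (brk a b c f) g T = gmul (a (b f)) g T + c * gmul (b (a f)) g T"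
    unfolding brk_def using gmul_linL[of 1 "a (b f)" c "b (a f)" g T] by simp
  have G2: "gmul f (brk a b c g) T = gmul f (a (b g)) T + c * gmul f (b (a g)) T"
    unfolding brk_def using gmul_linR[of f 1 "a (b g)" c "b (a g)" T] by simp
  show "brk a b (- sg (pa \<and> pb)) (gmul f g) T =
      gmul (brk a b (- sg (pa \<and> pb)) f) g T + sg ((pa \<noteq> pb) \<and> q) * gmul f (brk a b (- sg (pa \<and> pb)) g) T"
    unfolding c_def[symmetric] G1 G2 unfolding brk_def AB BA c_def
    by (cases pa; cases pb; cases q) (simp_all add: sg_def algebra_simps)
qed

lemma leib_sq:
  assumes la: "lin a" and pa: "parm a True" and da: "leib a True"
  shows "leib (\<lambda>f. a (a f)) False"
  unfolding leib_def
proof (intro ballI allI impI ext)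
  fix f g :: "'a grass" and q T assume f: "f \<in> Lambda" and g: "g \<in> Lambda" and h: "hom q f"
  have Lf: "a f \<in> Lambda" "a g \<in> Lambda" using lin_Lambda la f g by auto
  have haf: "hom (q \<noteq> True) (a f)" using parmD[OF pa f h] by simp
  have A: "a (gmul f g) = (\<lambda>T. gmul (a f) g T + sg (True \<and> q) * gmul f (a g) T)"
    using leibD[OF da f g h] by auto
  have "a (a (gmul f g)) = (\<lambda>T. a (gmul (a f) g) T + sg (True \<and> q) * a (gmul f (a g)) T)"
    unfolding A by (rule lin_lin[OF la gmul_Lambda[OF Lf(1) g] gmul_Lambda[OF f Lf(2)]])
  then have "a (a (gmul f g)) T = gmul (a (a f)) g T + sg (True \<and> (q \<noteq> True)) * gmul (a f) (a g) T
     + sg (True \<and> q) * (gmul (a f) (a g) T + sg (True \<and> q) * gmul f (a (a g)) T)"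
    using leibD[OF da Lf(1) g haf] leibD[OF da f Lf(2) h] by simp
  then show "a (a (gmul f g)) T = gmul (a (a f)) g T + sg (False \<and> q) * gmul f (a (a g)) T"
    by (cases q) (simp_all add: sg_def algebra_simps)
qed

lemma comp_supp:
  assumes la: "lin a" and da: "leib a pa" and lb: "lin b"
    and nz: "a (b (dl {k})) S \<noteq> 0"
  shows "\<exists>T j S'. b (dl {k}) T \<noteq> 0 \<and> j \<in> T \<and> a (dl {j}) S' \<noteq> 0 \<and> S' \<inter> (T - {j}) = {} \<and> S = S' \<union> (T - {j})"
proof -
  have L: "b (dl {k}) \<in> Lambda" using lin_Lambda[OF lb dl_Lambda] by simp
  obtain T where T: "T \<in> supp (b (dl {k}))" "a (dl T) S \<noteq> 0" using lin_nz[OF la L nz] by blast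
  have "finite T" using supp_fin[OF L T(1)] .
  then obtain j S' where "j \<in> T" "a (dl {j}) S' \<noteq> 0" "S' \<inter> (T - {j}) = {}" "S = S' \<union> (T - {j})"
    using leib_support[OF la da _ T(2)] by blast
  then show ?thesis using T(1) unfolding supp_def by blast
qed


definition Fk :: "nat \<Rightarrow> nat \<Rightarrow> 'k::field gop" where
  "Fk i k h = foldr (\<lambda>n g. xmul (i + 3*n) (xmul (i + 3*n + 1) g)) [0..<k] h"

definition tls :: "nat \<Rightarrow> nat \<Rightarrow> nat set" where
  "tls m r = {t. \<exists>n<r. t = m + 3*n \<or> t = m + 3*n + 1}"

lemma pt_Fk: "pivot_term i k f = Fk i k (dder (i + 3*k) f)"
  unfolding pivot_term_def Fk_def by simp

lemma Fk_0[simp]: "Fk i 0 h = h"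
  unfolding Fk_def by simp

lemma Fk_Suc: "Fk i (Suc k) h = Fk i k (xmul (i + 3*k) (xmul (i + 3*k + 1) h))"
  unfolding Fk_def by simp

lemma xmul_lin: "xmul j (\<lambda>T. u T + c * v T) = (\<lambda>T. xmul j u T + c * xmul j v T)"
  unfolding xmul_def by (intro ext) (simp add: algebra_simps)

lemma xmul_scale: "xmul j (\<lambda>T. c * v T) = (\<lambda>T. c * xmul j v T)"
  unfolding xmul_def by (intro ext) (simp add: algebra_simps)

lemma dder_lin: "dder j (\<lambda>T. u T + c * v T) = (\<lambda>T. dder j u T + c * dder j v T)"
  unfolding dder_def by (intro ext) (simp add: algebra_simps)

lemma Fk_lin: "Fk i k (\<lambda>T. u T + c * v T) = (\<lambda>T. Fk i k u T + c * Fk i k v T)"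
proof (induction k arbitrary: u v)
  case 0 then show ?case by simp
next
  case (Suc k) then show ?case by (simp add: Fk_Suc xmul_lin)
qed

lemma xmul_zero: "xmul j (\<lambda>T. 0) = (\<lambda>T. 0)"
  unfolding xmul_def by auto

lemma Fk_zero: "Fk i k (\<lambda>T. 0) = (\<lambda>T. 0)"
  by (induction k) (simp_all add: Fk_Suc xmul_zero)

lemma L1f: "xmul a (gmul u g) = gmul (xmul a u) g"
  by (rule ext) (rule L1)

lemma L2f: assumes "hom q f" shows "xmul a (gmul f w) = (\<lambda>T. sg q * gmul f (xmul a w) T)"
  by (rule ext) (rule L2[OF assms])

lemma Fk_gmulL: "Fk i k (gmul u g) = gmul (Fk i k u) g"
proof (induction k arbitrary: u)
  case 0 then show ?case by simp
next
  case (Suc k) then show ?case by (simp add: Fk_Suc L1f)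
qed

lemma sg_sq: "sg q * sg q = (1::'k::field)"
  unfolding sg_def by simp

lemma Fk_gmulR: "hom q f \<Longrightarrow> Fk i k (gmul f w) = gmul f (Fk i k w)"
proof (induction k arbitrary: w)
  case 0 then show ?case by simp
next
  case (Suc k)
  have "xmul (i + 3*k) (xmul (i + 3*k + 1) (gmul f w)) = gmul f (xmul (i + 3*k) (xmul (i + 3*k + 1) w))"
    using L2f[OF Suc.prems] by (simp add: xmul_scale sg_sq mult.assoc[symmetric])
  then show ?case using Suc by (simp add: Fk_Suc)
qed

lemma Fk_Lambda: "h \<in> Lambda \<Longrightarrow> Fk i k h \<in> Lambda"
  by (induction k arbitrary: h) (simp_all add: Fk_Suc xmul_Lambda)

lemma Fk_hom: "h \<in> Lambda \<Longrightarrow> hom q h \<Longrightarrow> hom q (Fk i k h)"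
proof (induction k arbitrary: h)
  case 0 then show ?case by simp
next
  case (Suc k)
  have "hom (\<not> \<not> q) (xmul (i + 3*k) (xmul (i + 3*k + 1) h))"
    using Suc.prems by (intro hom_xmul xmul_Lambda) auto
  then show ?case using Suc by (simp add: Fk_Suc xmul_Lambda)
qed

lemma tls_Suc: "tls m (Suc r) = tls m r \<union> {m + 3*r, m + 3*r + 1}"
  unfolding tls_def by (auto simp: less_Suc_eq)

lemma tls_0[simp]: "tls m 0 = {}"
  unfolding tls_def by simp

lemma Fk_supp: "Fk i k h S \<noteq> 0 \<Longrightarrow> \<exists>B. h B \<noteq> 0 \<and> S = B \<union> tls i k"
proof (induction k arbitrary: h)
  case 0 then show ?case by auto
next
  case (Suc k)
  obtain B' where B': "xmul (i + 3*k) (xmul (i + 3*k + 1) h) B' \<noteq> 0" "S = B' \<union> tls i k"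
    using Suc.IH[of "xmul (i + 3*k) (xmul (i + 3*k + 1) h)"] Suc.prems by (auto simp: Fk_Suc)
  then have "i + 3*k \<in> B'" "xmul (i + 3*k + 1) h (B' - {i + 3*k}) \<noteq> 0"
    unfolding xmul_def by (auto split: if_splits)
  then have "i + 3*k + 1 \<in> B'" "h (B' - {i + 3*k} - {i + 3*k + 1}) \<noteq> 0"
    unfolding xmul_def by (auto split: if_splits)
  moreover have "S = (B' - {i + 3*k} - {i + 3*k + 1}) \<union> tls i (Suc k)"
    using B'(2) calculation \<open>i + 3*k \<in> B'\<close> unfolding tls_Suc by auto
  ultimately show ?case by blast
qed

definition Kset :: "nat \<Rightarrow> 'k::field grass \<Rightarrow> nat set" where
  "Kset i f = {k. dder (i + 3*k) f \<noteq> (\<lambda>T. 0)}"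

lemma Kset_finite: "f \<in> Lambda \<Longrightarrow> finite (Kset i f)"
proof -
  assume f: "f \<in> Lambda"
  have fin: "finite (\<Union>(supp f))" using f unfolding Lambda_iff supp_def by auto
  have "Kset i f \<subseteq> (\<lambda>k. i + 3*k) -` (\<Union>(supp f))"
  proof
    fix k assume "k \<in> Kset i f"
    then obtain T where "dder (i + 3*k) f T \<noteq> 0" unfolding Kset_def by auto
    then have "f (insert (i + 3*k) T) \<noteq> 0" unfolding dder_def by (auto split: if_splits)
    then show "k \<in> (\<lambda>k. i + 3*k) -` (\<Union>(supp f))" unfolding supp_def by auto
  qed
  moreover have "finite ((\<lambda>k. i + 3*k) -` (\<Union>(supp f)))"
    using fin by (rule finite_vimageI) (auto simp: inj_on_def)
  ultimately show ?thesis by (rule finite_subset)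
qed

lemma piv_sum: "finite F \<Longrightarrow> Kset i f \<subseteq> F \<Longrightarrow> pivot i f = (\<lambda>T. \<Sum>k\<in>F. pivot_term i k f T)"
proof
  fix T assume F: "finite F" "Kset i f \<subseteq> F"
  have "pivot i f T = (\<Sum>k\<in>Kset i f. pivot_term i k f T)" unfolding pivot_def Kset_def by simp
  also have "\<dots> = (\<Sum>k\<in>F. pivot_term i k f T)"
  proof (rule sum.mono_neutral_left[OF F(1) F(2)], rule ballI)
    fix k assume "k \<in> F - Kset i f"
    then have "dder (i + 3*k) f = (\<lambda>T. 0)" unfolding Kset_def by auto
    then show "pivot_term i k f T = 0" unfolding pt_Fk by (simp add: Fk_zero)
  qed
  finally show "pivot i f T = (\<Sum>k\<in>F. pivot_term i k f T)" .
qed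

lemma pt_Lambda: "f \<in> Lambda \<Longrightarrow> pivot_term i k f \<in> Lambda"
  unfolding pt_Fk by (intro Fk_Lambda dder_Lambda)

lemma pt_lin: "pivot_term i k (\<lambda>T. u T + c * v T) = (\<lambda>T. pivot_term i k u T + c * pivot_term i k v T)"
  unfolding pt_Fk dder_lin Fk_lin ..

lemma hom_sum: "(\<forall>x\<in>F. hom r (u x)) \<Longrightarrow> hom r (\<lambda>T. \<Sum>x\<in>F. u x T)"
  unfolding hom_def by (metis (mono_tags, lifting) sum.neutral)

lemma piv_Lambda: "f \<in> Lambda \<Longrightarrow> pivot i f \<in> Lambda"
proof -
  assume f: "f \<in> Lambda"
  have "(\<lambda>T. \<Sum>k\<in>Kset i f. 1 * pivot_term i k f T) \<in> Lambda"
    using f Kset_finite[OF f] by (intro Lambda_sum) (auto intro: pt_Lambda)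
  then show ?thesis using piv_sum[OF Kset_finite[OF f] order_refl] by simp
qed

lemma piv_lin: "lin (pivot i)"
  unfolding lin_def
proof (intro conjI ballI allI)
  fix f :: "'a grass" assume "f \<in> Lambda" then show "pivot i f \<in> Lambda" by (rule piv_Lambda)
next
  fix f g :: "'a grass" and c assume f: "f \<in> Lambda" and g: "g \<in> Lambda"
  define F where "F = Kset i f \<union> Kset i g \<union> Kset i (\<lambda>T. f T + c * g T)"
  have F: "finite F" unfolding F_def using f g Kset_finite Lambda_lin by blast
  have e1: "pivot i f = (\<lambda>T. \<Sum>k\<in>F. pivot_term i k f T)" by (rule piv_sum[OF F]) (auto simp: F_def)
  have e2: "pivot i g = (\<lambda>T. \<Sum>k\<in>F. pivot_term i k g T)" by (rule piv_sum[OF F]) (auto simp: F_def)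
  have e3: "pivot i (\<lambda>T. f T + c * g T) = (\<lambda>T. \<Sum>k\<in>F. pivot_term i k (\<lambda>T. f T + c * g T) T)"
    by (rule piv_sum[OF F]) (auto simp: F_def)
  show "pivot i (\<lambda>T. f T + c * g T) = (\<lambda>T. pivot i f T + c * pivot i g T)"
    unfolding e1 e2 e3 pt_lin by (simp add: sum.distrib sum_distrib_left)
qed

lemma piv_parm: "parm (pivot i) True"
  unfolding parm_def
proof (intro ballI allI impI)
  fix f :: "'a grass" and q assume f: "f \<in> Lambda" and h: "hom q f"
  have "hom (\<not> q) (\<lambda>T. \<Sum>k\<in>Kset i f. pivot_term i k f T)"
    unfolding pt_Fk using f h by (intro hom_sum ballI Fk_hom dder_Lambda hom_dder)
  then show "hom (q \<noteq> True) (pivot i f)" using piv_sum[OF Kset_finite[OF f] order_refl] by simp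
qed

lemma piv_leib: "leib (pivot i) True"
  unfolding leib_def
proof (intro ballI allI impI ext)
  fix f g :: "'a grass" and q T assume f: "f \<in> Lambda" and g: "g \<in> Lambda" and h: "hom q f"
  define F where "F = Kset i f \<union> Kset i g \<union> Kset i (gmul f g)"
  have F: "finite F" unfolding F_def using f g Kset_finite gmul_Lambda by blast
  have pt: "\<And>k. pivot_term i k (gmul f g) T = gmul (pivot_term i k f) g T + sg q * gmul f (pivot_term i k g) T"
  proof -
    fix k
    have d: "dder (i + 3*k) (gmul f g) = (\<lambda>T. gmul (dder (i + 3*k) f) g T + sg q * gmul f (dder (i + 3*k) g) T)"
      by (rule ext) (rule L3[OF h])
    show "pivot_term i k (gmul f g) T = gmul (pivot_term i k f) g T + sg q * gmul f (pivot_term i k g) T"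
      unfolding pt_Fk d Fk_lin unfolding Fk_gmulR[OF h] unfolding Fk_gmulL by simp
  qed
  have e1: "pivot i f = (\<lambda>T. \<Sum>k\<in>F. pivot_term i k f T)" by (rule piv_sum[OF F]) (auto simp: F_def)
  have e2: "pivot i g = (\<lambda>T. \<Sum>k\<in>F. pivot_term i k g T)" by (rule piv_sum[OF F]) (auto simp: F_def)
  have e3: "pivot i (gmul f g) = (\<lambda>T. \<Sum>k\<in>F. pivot_term i k (gmul f g) T)"
    by (rule piv_sum[OF F]) (auto simp: F_def)
  have "pivot i (gmul f g) T = (\<Sum>k\<in>F. pivot_term i k (gmul f g) T)"
    unfolding e3 by simp
  also have "\<dots> = (\<Sum>k\<in>F. gmul (pivot_term i k f) g T) + sg q * (\<Sum>k\<in>F. gmul f (pivot_term i k g) T)"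
    unfolding pt by (simp add: sum.distrib sum_distrib_left)
  also have "\<dots> = gmul (pivot i f) g T + sg q * gmul f (pivot i g) T"
    unfolding e1 e2 gmul_sumL gmul_sumR by simp
  finally show "pivot i (gmul f g) T = gmul (pivot i f) g T + sg (True \<and> q) * gmul f (pivot i g) T"
    by simp
qed

lemma piv_supp: "pivot i (dl {j} :: 'a::field grass) S \<noteq> 0 \<Longrightarrow> \<exists>k. j = i + 3*k \<and> S = tls i k"
proof -
  assume nz: "pivot i (dl {j} :: 'a grass) S \<noteq> 0"
  have L: "(dl {j} :: 'a grass) \<in> Lambda" by (rule dl_Lambda) simp
  have e: "pivot i (dl {j} :: 'a grass) = (\<lambda>T. \<Sum>k\<in>Kset i (dl {j} :: 'a grass). pivot_term i k (dl {j} :: 'a grass) T)"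
    using piv_sum[of "Kset i (dl {j} :: 'a grass)" i "dl {j} :: 'a grass"] Kset_finite[OF L] by simp
  have "(\<Sum>k\<in>Kset i (dl {j} :: 'a grass). pivot_term i k (dl {j} :: 'a grass) S) \<noteq> 0"
    using nz unfolding e by simp
  then obtain k where "pivot_term i k (dl {j} :: 'a grass) S \<noteq> 0" by (meson sum.not_neutral_contains_not_neutral)
  then have "Fk i k (dder (i + 3*k) (dl {j} :: 'a grass)) S \<noteq> 0" unfolding pt_Fk .
  then obtain B where B: "dder (i + 3*k) (dl {j} :: 'a grass) B \<noteq> 0" "S = B \<union> tls i k"
    using Fk_supp by blast
  then have "i + 3*k \<notin> B" "insert (i + 3*k) B = {j}" unfolding dder_def dl_def by (auto split: if_splits)
  then have "B = {}" "j = i + 3*k" by auto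
  then show ?thesis using B by auto
qed




definition gx :: "nat \<Rightarrow> nat set \<Rightarrow> bool" where
  "gx m X \<longleftrightarrow> X \<subseteq> {..<m} \<and> (\<forall>x\<in>X. x + 1 \<noteq> m) \<and>
     \<not> (\<exists>x. x \<in> X \<and> x + 1 \<in> X \<and> x + 3 = m) \<and> \<not> (\<exists>x. x \<in> X \<and> x + 2 \<in> X \<and> x + 4 = m)"

definition Good :: "nat \<Rightarrow> nat set \<Rightarrow> bool" where
  "Good k S \<longleftrightarrow> (\<exists>m r X. k = m + 3*r \<and> S = X \<union> tls m r \<and> gx m X)"

lemma tls_mem: "t \<in> tls m r \<longleftrightarrow> (\<exists>n<r. t = m + 3*n \<or> t = m + 3*n + 1)"
  unfolding tls_def by simp

lemma Good_bound: "Good k S \<Longrightarrow> x \<in> S \<Longrightarrow> x < k \<and> x + 1 \<noteq> k"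
proof -
  assume "Good k S" "x \<in> S"
  then obtain m r X where k: "k = m + 3*r" and S: "S = X \<union> tls m r" and g: "gx m X" unfolding Good_def by blast
  consider "x \<in> X" | "x \<in> tls m r" using S \<open>x \<in> S\<close> by blast
  then show ?thesis
  proof cases
    case 1
    then have "x < m" "x + 1 \<noteq> m" using g unfolding gx_def by auto
    then show ?thesis unfolding k by (cases r) auto
  next
    case 2
    then obtain n where "n < r" "x = m + 3*n \<or> x = m + 3*n + 1" unfolding tls_mem by blast
    then show ?thesis unfolding k by (auto; presburger)
  qed
qed

lemma Good_finite: "Good k S \<Longrightarrow> finite S"
  using Good_bound by (meson finite_lessThan finite_subset lessThan_iff subsetI)

lemma tls_split: "t < r \<Longrightarrow> tls m r = tls m t \<union> {m + 3*t, m + 3*t + 1} \<union> tls (m + 3*(t+1)) (r - t - 1)"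
  unfolding tls_def
proof (intro set_eqI iffI)
  fix x assume t: "t < r" and "x \<in> {t. \<exists>n<r. t = m + 3 * n \<or> t = m + 3 * n + 1}"
  then obtain n where n: "n < r" "x = m + 3 * n \<or> x = m + 3 * n + 1" by auto
  consider "n < t" | "n = t" | "t < n" by linarith
  then show "x \<in> {ta. \<exists>n<t. ta = m + 3 * n \<or> ta = m + 3 * n + 1} \<union> {m + 3 * t, m + 3 * t + 1} \<union>
             {ta. \<exists>n<r - t - 1. ta = m + 3 * (t + 1) + 3 * n \<or> ta = m + 3 * (t + 1) + 3 * n + 1}"
  proof cases
    case 3
    then have "n - t - 1 < r - t - 1" "m + 3 * n = m + 3 * (t + 1) + 3 * (n - t - 1)" using n by auto
    then show ?thesis using n by auto
  qed (use n in auto)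
next
  fix x assume t: "t < r" and "x \<in> {ta. \<exists>n<t. ta = m + 3 * n \<or> ta = m + 3 * n + 1} \<union> {m + 3 * t, m + 3 * t + 1} \<union>
             {ta. \<exists>n<r - t - 1. ta = m + 3 * (t + 1) + 3 * n \<or> ta = m + 3 * (t + 1) + 3 * n + 1}"
  then consider (a) n where "n < t" "x = m + 3 * n \<or> x = m + 3 * n + 1" | (b) "x = m + 3*t \<or> x = m + 3*t + 1"
     | (c) n where "n < r - t - 1" "x = m + 3 * (t + 1) + 3 * n \<or> x = m + 3 * (t + 1) + 3 * n + 1" by auto
  then show "x \<in> {t. \<exists>n<r. t = m + 3 * n \<or> t = m + 3 * n + 1}"
  proof cases
    case a then show ?thesis using t by (intro CollectI exI[of _ n]) auto
  next
    case b then show ?thesis using t by (intro CollectI exI[of _ t]) auto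
  next
    case (c n) then show ?thesis using t by (intro CollectI exI[of _ "n + t + 1"]) auto
  qed
qed

lemma Good_closed:
  assumes T: "Good k T" and j: "j \<in> T" and S: "Good j S" and d: "S \<inter> (T - {j}) = {}"
  shows "Good k (S \<union> (T - {j}))"
proof -
  obtain m r X where k: "k = m + 3*r" and TX: "T = X \<union> tls m r" and g: "gx m X" using T unfolding Good_def by auto
  have Sb: "\<And>x. x \<in> S \<Longrightarrow> x < j \<and> x + 1 \<noteq> j" using Good_bound[OF S] by blast
  have Xm: "\<And>x. x \<in> X \<Longrightarrow> x < m" using g unfolding gx_def by auto
  have tm: "\<And>x. x \<in> tls m r \<Longrightarrow> m \<le> x" unfolding tls_mem by auto
  consider (a) "j \<in> X" | (b) "j \<in> tls m r" using j TX by auto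
  then show ?thesis
  proof cases
    case a
    have jm: "j < m" "j + 1 \<noteq> m" using a g unfolding gx_def by auto
    have e: "S \<union> (T - {j}) = ((X - {j}) \<union> S) \<union> tls m r" using TX tm jm(1) by fastforce
    have "gx m ((X - {j}) \<union> S)"
      unfolding gx_def
    proof (intro conjI notI ballI subsetI)
      fix x assume "x \<in> X - {j} \<union> S"
      then show "x \<in> {..<m}" using Xm Sb jm by fastforce
    next
      fix x assume "x \<in> X - {j} \<union> S" "x + 1 = m"
      then show False using g Sb jm unfolding gx_def by fastforce
    next
      assume "\<exists>x. x \<in> X - {j} \<union> S \<and> x + 1 \<in> X - {j} \<union> S \<and> x + 3 = m"
      then obtain x where x: "x \<in> X - {j} \<union> S" "x + 1 \<in> X - {j} \<union> S" "x + 3 = m" by blast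
      have "x + 1 \<notin> S" using Sb jm x(3) by fastforce
      then have x1: "x + 1 \<in> X" "x + 1 \<noteq> j" using x(2) by auto
      show False
      proof (cases "x \<in> S")
        case True
        then have "x < j" using Sb by blast
        then show False using x1 jm x(3) by linarith
      next
        case False
        then have "x \<in> X" using x(1) by auto
        then show False using x1 x(3) g unfolding gx_def by blast
      qed
    next
      assume "\<exists>x. x \<in> X - {j} \<union> S \<and> x + 2 \<in> X - {j} \<union> S \<and> x + 4 = m"
      then obtain x where x: "x \<in> X - {j} \<union> S" "x + 2 \<in> X - {j} \<union> S" "x + 4 = m" by blast
      have "x + 2 \<notin> S" using Sb jm x(3) by fastforce
      then have x1: "x + 2 \<in> X" "x + 2 \<noteq> j" using x(2) by auto
      show False
      proof (cases "x \<in> S")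
        case True
        then have "x < j" using Sb by blast
        moreover have "j \<noteq> x + 1"
        proof
          assume jx: "j = x + 1"
          have "j \<in> X \<and> j + 1 \<in> X \<and> j + 3 = m" using a x1 x(3) jx by auto
          then show False using g unfolding gx_def by blast
        qed
        moreover have "j \<noteq> x" using True d TX a Sb by blast
        ultimately show False using x1 jm x(3) by linarith
      next
        case False
        then have "x \<in> X" using x(1) by auto
        then show False using x1 x(3) g unfolding gx_def by blast
      qed
    qed
    then show ?thesis unfolding Good_def e k by blast
  next
    case b
    then obtain t where t: "t < r" "j = m + 3*t \<or> j = m + 3*t + 1" unfolding tls_mem by auto
    define m' where "m' = m + 3*(t+1)"
    define r' where "r' = r - t - 1"
    have k': "k = m' + 3*r'" unfolding m'_def r'_def k using t by auto
    have spl: "tls m r = tls m t \<union> {m + 3*t, m + 3*t + 1} \<union> tls m' r'"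
      unfolding m'_def r'_def by (rule tls_split[OF t(1)])
    have tm': "\<And>x. x \<in> tls m' r' \<Longrightarrow> m' \<le> x" unfolding tls_mem by auto
    have tlt: "\<And>x. x \<in> tls m t \<Longrightarrow> m \<le> x \<and> x + 2 \<le> m + 3*t \<and> (\<exists>n. x = m + 3*n \<or> x = m + 3*n + 1)"
      unfolding tls_mem by auto
    from t(2) show ?thesis
    proof
      assume j1: "j = m + 3*t"
      define X' where "X' = X \<union> tls m t \<union> {m + 3*t + 1} \<union> S"
      have jn: "j \<notin> X" "j \<notin> tls m t" "j \<notin> tls m' r'"
        using Xm tlt tm' j1 unfolding m'_def by (fastforce, fastforce, fastforce)
      have e: "S \<union> (T - {j}) = X' \<union> tls m' r'"
        unfolding X'_def TX spl using jn j1 by auto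
      have "gx m' X'"
        unfolding gx_def
      proof (intro conjI notI ballI subsetI)
        fix x assume "x \<in> X'"
        then show "x \<in> {..<m'}" unfolding X'_def m'_def using Xm tlt Sb j1 by fastforce
      next
        fix x assume "x \<in> X'" "x + 1 = m'"
        then show False unfolding X'_def m'_def using Xm tlt Sb j1 by fastforce
      next
        assume "\<exists>x. x \<in> X' \<and> x + 1 \<in> X' \<and> x + 3 = m'"
        then obtain x where x: "x \<in> X'" "x + 3 = m'" by blast
        then have "x = m + 3*t" unfolding m'_def by simp
        then show False using x(1) unfolding X'_def using Xm tlt Sb j1 by fastforce
      next
        assume "\<exists>x. x \<in> X' \<and> x + 2 \<in> X' \<and> x + 4 = m'"
        then obtain x where x: "x \<in> X'" "x + 4 = m'" by blast
        then have xe: "x + 1 = m + 3*t" unfolding m'_def by simp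
        have "x \<notin> X"
        proof
          assume "x \<in> X"
          then have "x < m" "x + 1 \<noteq> m" using g unfolding gx_def by auto
          then show False using xe by (cases t) auto
        qed
        moreover have "x \<notin> tls m t"
        proof
          assume "x \<in> tls m t"
          then obtain n where "x = m + 3*n \<or> x = m + 3*n + 1" unfolding tls_mem by blast
          then show False using xe by (auto; presburger)
        qed
        moreover have "x \<notin> S" using Sb xe j1 by blast
        moreover have "x \<noteq> m + 3*t + 1" using xe by simp
        ultimately show False using x(1) unfolding X'_def by blast
      qed
      then show ?thesis unfolding Good_def e k' by blast
    next
      assume j1: "j = m + 3*t + 1"
      define X' where "X' = X \<union> tls m t \<union> {m + 3*t} \<union> S"
      have jn: "j \<notin> X" "j \<notin> tls m t" "j \<notin> tls m' r'"
        using Xm tlt tm' j1 unfolding m'_def by (fastforce, fastforce, fastforce)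
      have e: "S \<union> (T - {j}) = X' \<union> tls m' r'"
        unfolding X'_def TX spl using jn j1 by auto
      have "gx m' X'"
        unfolding gx_def
      proof (intro conjI notI ballI subsetI)
        fix x assume "x \<in> X'"
        then show "x \<in> {..<m'}" unfolding X'_def m'_def using Xm tlt Sb j1 by fastforce
      next
        fix x assume "x \<in> X'" "x + 1 = m'"
        then show False unfolding X'_def m'_def using Xm tlt Sb j1 by fastforce
      next
        assume "\<exists>x. x \<in> X' \<and> x + 1 \<in> X' \<and> x + 3 = m'"
        then obtain x where x: "x + 1 \<in> X'" "x + 3 = m'" by blast
        then have "x + 1 = j" unfolding m'_def j1 by simp
        then show False using x(1) unfolding X'_def using Xm tlt Sb j1 by fastforce
      next
        assume "\<exists>x. x \<in> X' \<and> x + 2 \<in> X' \<and> x + 4 = m'"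
        then obtain x where x: "x + 2 \<in> X'" "x + 4 = m'" by blast
        then have "x + 2 = j" unfolding m'_def j1 by simp
        then show False using x(1) unfolding X'_def using Xm tlt Sb j1 by fastforce
      qed
      then show ?thesis unfolding Good_def e k' by blast
    qed
  qed
qed



lemma r1: assumes "(t::real)^3 - t - 2 = 0" shows "t > 1"
proof (rule ccontr)
  assume "\<not> t > 1" then have t1: "t \<le> 1" by simp
  have e: "t^3 - t = t * (t^2 - 1)" by (simp add: algebra_simps power2_eq_square power3_eq_cube)
  show False
  proof (cases "t \<le> -1")
    case True
    have "1 \<le> (-t)^2" by (rule one_le_power) (use True in linarith)
    then have "t^2 \<ge> 1" by simp
    then have "t * (t^2 - 1) \<le> 0" using True by (intro mult_nonpos_nonneg) auto
    then show False using assms e by linarith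
  next
    case False
    then have a: "\<bar>t\<bar> \<le> 1" using t1 by auto
    then have "t^2 \<le> 1" using abs_le_square_iff[of t 1] by simp
    then have b: "\<bar>t^2 - 1\<bar> \<le> 1" by auto
    have "\<bar>t * (t^2 - 1)\<bar> \<le> 1 * 1" unfolding abs_mult by (intro mult_mono a b) auto
    then show False using assms e by linarith
  qed
qed
lemma r2: assumes "(t::real)^3 - t - 2 = 0" "(s::real)^3 - s - 2 = 0" shows "t = s"
proof -
  have t: "t > 1" "s > 1" using r1 assms by auto
  have "(s - t) * (s^2 + s*t + t^2 - 1) = 0" using assms
    by (simp add: algebra_simps power2_eq_square power3_eq_cube)
  moreover have "s^2 + s*t + t^2 - 1 > 0"
  proof -
    have "s*t > 1" using t by (metis less_1_mult)
    moreover have "s^2 \<ge> 0" "t^2 \<ge> 0" by auto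
    ultimately show ?thesis by linarith
  qed
  ultimately show ?thesis by simp
qed
lemma lam_ex: "\<exists>t::real. 152/100 \<le> t \<and> t \<le> 153/100 \<and> t^3 - t - 2 = 0"
proof -
  have "\<exists>x::real. 152/100 \<le> x \<and> x \<le> 153/100 \<and> x^3 - x - 2 = 0"
    by (rule IVT'[of "\<lambda>x::real. x^3 - x - 2"]) (auto intro!: continuous_intros simp: power3_eq_cube)
  then show ?thesis by blast
qed

lemma lam_facts: "lam^3 = lam + 2" "152/100 \<le> lam" "lam \<le> 153/100"
proof -
  obtain t :: real where t: "152/100 \<le> t" "t \<le> 153/100" "t^3 - t - 2 = 0" using lam_ex by blast
  have "lam = t" unfolding lam_def
  proof (rule the_equality)
    show "t^3 - t - 2 = 0" by (rule t(3))
  next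
    fix s :: real assume "s^3 - s - 2 = 0"
    then show "s = t" by (rule r2[OF _ t(3)])
  qed
  then show "lam^3 = lam + 2" "152/100 \<le> lam" "lam \<le> 153/100" using t by auto
qed

definition mu0 :: complex where
  "mu0 = Complex (- lam / 2) (sqrt (3 * lam^2 / 4 - 1))"

lemma lam_gt: "3 * lam^2 / 4 - 1 > 0"
proof -
  have "lam^2 \<ge> (152/100)^2" using lam_facts(2) by (intro power_mono) auto
  moreover have "(152/100::real)^2 = 23104/10000" by (simp add: power2_eq_square)
  ultimately show ?thesis by linarith
qed

lemma cubic_factor: "(z::complex)^3 - z - 2 = (z - of_real lam) * (z^2 + of_real lam * z + of_real lam^2 - 1)"
proof -
  have "(of_real lam :: complex)^3 = of_real lam + 2" using lam_facts(1) by (metis of_real_add of_real_numeral of_real_power)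
  then show ?thesis by (simp add: algebra_simps power2_eq_square power3_eq_cube)
qed

lemma quad_iff: "(z::complex)^2 + of_real lam * z + of_real lam^2 - 1 = 0 \<longleftrightarrow>
   (Re z)^2 - (Im z)^2 + lam * Re z + lam^2 - 1 = 0 \<and> 2 * Re z * Im z + lam * Im z = 0"
  by (simp add: complex_eq_iff power2_eq_square algebra_simps)

lemma mu0_root: "mu0^3 - mu0 - 2 = 0 \<and> Im mu0 > 0"
proof
  have s: "(sqrt (3 * lam^2 / 4 - 1))^2 = 3 * lam^2 / 4 - 1" using lam_gt by simp
  have "mu0^2 + of_real lam * mu0 + of_real lam^2 - 1 = 0"
    unfolding quad_iff mu0_def using s by (simp add: power2_eq_square algebra_simps)
  then show "mu0^3 - mu0 - 2 = 0" unfolding cubic_factor by simp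
  show "Im mu0 > 0" unfolding mu0_def using lam_gt by simp
qed

lemma mu_unique: assumes "z^3 - z - 2 = 0" "Im z > 0" shows "z = mu0"
proof -
  have "z \<noteq> of_real lam" using assms(2) by auto
  then have q: "z^2 + of_real lam * z + of_real lam^2 - 1 = 0" using assms(1) unfolding cubic_factor by simp
  then have a: "(Re z)^2 - (Im z)^2 + lam * Re z + lam^2 - 1 = 0" "2 * Re z * Im z + lam * Im z = 0"
    unfolding quad_iff by auto
  from a(2) have "(2 * Re z + lam) * Im z = 0" by (simp add: algebra_simps)
  then have re: "Re z = - lam / 2" using assms(2) by simp
  then have "(Im z)^2 = 3 * lam^2 / 4 - 1" using a(1) by (simp add: power2_eq_square algebra_simps)
  then have im: "Im z = sqrt (3 * lam^2 / 4 - 1)" using assms(2) by (metis abs_of_pos real_sqrt_abs)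
  show ?thesis using re im unfolding mu0_def by (simp add: complex_eq_iff)
qed

lemma mu_eq: "mu = mu0"
  unfolding mu_def
proof (rule the_equality)
  show "mu0^3 - mu0 - 2 = 0 \<and> Im mu0 > 0" by (rule mu0_root)
next
  fix z assume "z^3 - z - 2 = 0 \<and> Im z > 0"
  then show "z = mu0" using mu_unique by blast
qed

lemma mu_root: "mu^3 = mu + 2"
  using mu0_root unfolding mu_eq by (simp add: algebra_simps)

lemma cmod_mu_sq: "(cmod mu)^2 = lam^2 - 1"
proof -
  have s: "(sqrt (3 * lam^2 / 4 - 1))^2 = 3 * lam^2 / 4 - 1" using lam_gt by simp
  show ?thesis unfolding mu_eq mu0_def cmod_def using s by (simp add: power2_eq_square algebra_simps)
qed

lemma lam_sq_rel: "lam * (lam^2 - 1) = 2"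
  using lam_facts(1) by (simp add: algebra_simps power2_eq_square power3_eq_cube)



definition wt :: "'a::comm_ring_1 \<Rightarrow> nat \<Rightarrow> nat set \<Rightarrow> 'a" where
  "wt x k S = x^k - (\<Sum>i\<in>S. x^i)"

definition ev :: "'a::comm_ring_1 \<Rightarrow> nat \<times> nat \<times> nat \<Rightarrow> 'a" where
  "ev x n = (case n of (a, b, c) \<Rightarrow> of_nat a + of_nat b * x + of_nat c * x^2)"

lemma ev_add: "ev x (deg_add d e) = ev x d + ev x e"
  unfolding ev_def deg_add_def by (cases d; cases e) (simp add: algebra_simps)

lemma ev_unit: "i < 3 \<Longrightarrow> ev x (deg_unit i) = x^i"
  unfolding ev_def deg_unit_def by (auto simp: numeral_3_eq_3 less_Suc_eq power2_eq_square)

lemma tls_disj: "m + 3*r \<notin> tls m r" "m + 3*r + 1 \<notin> tls m r"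
  unfolding tls_mem by auto

lemma tls_finite: "finite (tls m r)"
  by (induction r) (simp_all add: tls_Suc)

lemma tail_id: "x^3 = x + 2 \<Longrightarrow> x^(m + 3*r) - (\<Sum>i\<in>tls m r. x^i) = (x^m :: 'a::comm_ring_1)"
proof (induction r)
  case 0 then show ?case by simp
next
  case (Suc r)
  have s: "(\<Sum>i\<in>tls m (Suc r). x^i) = (\<Sum>i\<in>tls m r. x^i) + x^(m + 3*r) + x^(m + 3*r + 1)"
    unfolding tls_Suc using tls_disj[of m r] tls_finite[of m r] by (simp add: algebra_simps)
  have e: "m + 3 * Suc r = (m + 3*r) + 3" by simp
  have p: "x^(m + 3 * Suc r) = x^(m + 3*r) * x^3" by (simp only: e power_add)
  have "x^(m + 3 * Suc r) = x^(m + 3*r) + x^(m + 3*r + 1) + x^(m + 3*r)"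
    unfolding p Suc.prems by (simp add: algebra_simps)
  then show ?case unfolding s using Suc by (simp add: algebra_simps)
qed

lemma wt_comp:
  assumes "finite S" "finite T" "j \<in> T" "S \<inter> (T - {j}) = {}"
  shows "wt x k (S \<union> (T - {j})) = wt x k T + wt x j S"
proof -
  have "(\<Sum>i\<in>S \<union> (T - {j}). x^i) = (\<Sum>i\<in>S. x^i) + (\<Sum>i\<in>T - {j}. x^i)"
    using assms by (intro sum.union_disjoint) auto
  moreover have "(\<Sum>i\<in>T. x^i) = x^j + (\<Sum>i\<in>T - {j}. x^i)"
    using assms by (simp add: sum.remove)
  ultimately show ?thesis unfolding wt_def by (simp add: algebra_simps)
qed

definition Pr :: "nat \<times> nat \<times> nat \<Rightarrow> nat \<Rightarrow> nat set \<Rightarrow> bool" where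
  "Pr n k S \<longleftrightarrow> Good k S \<and> wt lam k S = ev lam n \<and> wt mu k S = ev mu n"

lemma Pr_comp:
  assumes "Pr nb k T" "j \<in> T" "Pr na j S" "S \<inter> (T - {j}) = {}"
  shows "Pr (deg_add na nb) k (S \<union> (T - {j}))" "Pr (deg_add nb na) k (S \<union> (T - {j}))"
proof -
  have f: "finite S" "finite T" using assms Good_finite unfolding Pr_def by auto
  have g: "Good k (S \<union> (T - {j}))" using Good_closed assms unfolding Pr_def by blast
  have w1: "wt lam k (S \<union> (T - {j})) = wt lam k T + wt lam j S" by (rule wt_comp[OF f assms(2,4)])
  have w2: "wt mu k (S \<union> (T - {j})) = wt mu k T + wt mu j S" by (rule wt_comp[OF f assms(2,4)])
  have p: "wt lam k T = ev lam nb" "wt mu k T = ev mu nb" "wt lam j S = ev lam na" "wt mu j S = ev mu na"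
    using assms(1,3) unfolding Pr_def by auto
  show "Pr (deg_add na nb) k (S \<union> (T - {j}))" "Pr (deg_add nb na) k (S \<union> (T - {j}))"
    unfolding Pr_def ev_add w1 w2 p using g by (simp_all add: algebra_simps)
qed

lemma Pr_gen: "i < 3 \<Longrightarrow> Pr (deg_unit i) (i + 3*k) (tls i k)"
proof -
  assume i: "i < 3"
  have g: "Good (i + 3*k) (tls i k)" unfolding Good_def gx_def by (intro exI[of _ i] exI[of _ k] exI[of _ "{}"]) simp
  show ?thesis unfolding Pr_def ev_unit[OF i] wt_def
    using g tail_id[OF lam_facts(1)] tail_id[OF mu_root] by simp
qed

definition supP :: "'k::field gop \<Rightarrow> nat \<times> nat \<times> nat \<Rightarrow> bool" where
  "supP a n \<longleftrightarrow> (\<forall>j S. a (dl {j}) S \<noteq> 0 \<longrightarrow> Pr n j S)"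

definition Inv :: "'k::field gop \<Rightarrow> nat \<times> nat \<times> nat \<Rightarrow> bool \<Rightarrow> bool" where
  "Inv a n p \<longleftrightarrow> lin a \<and> parm a p \<and> leib a p \<and> supP a n"

lemma Inv_gen: "i < 3 \<Longrightarrow> Inv (pivot i :: 'k::field gop) (deg_unit i) True"
  unfolding Inv_def supP_def using piv_lin piv_parm piv_leib piv_supp Pr_gen by metis

lemma supP_comp:
  assumes la: "lin a" and da: "leib a pa" and lb: "lin b" and sa: "supP a na" and sb: "supP b nb"
    and nz: "a (b (dl {k})) S \<noteq> 0"
  shows "Pr (deg_add na nb) k S \<and> Pr (deg_add nb na) k S"
proof -
  obtain T j S' where T: "b (dl {k}) T \<noteq> 0" "j \<in> T" "a (dl {j}) S' \<noteq> 0" "S' \<inter> (T - {j}) = {}" "S = S' \<union> (T - {j})"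
    using comp_supp[OF la da lb nz] by blast
  have "Pr nb k T" "Pr na j S'" using T sa sb unfolding supP_def by auto
  then show ?thesis using Pr_comp[of nb k T j na S'] T by auto
qed

lemma Inv_brk:
  assumes a: "Inv a da pa" and b: "Inv b db pb"
  shows "Inv (superbracket a pa b pb) (deg_add da db) (pa \<noteq> pb)"
proof -
  have la: "lin a" "parm a pa" "leib a pa" "supP a da" and lb: "lin b" "parm b pb" "leib b pb" "supP b db"
    using a b unfolding Inv_def by auto
  have s: "supP (brk a b (- sg (pa \<and> pb))) (deg_add da db)"
    unfolding supP_def
  proof (intro allI impI)
    fix j S assume nz: "brk a b (- sg (pa \<and> pb)) (dl {j}) S \<noteq> 0"
    then consider "a (b (dl {j})) S \<noteq> 0" | "b (a (dl {j})) S \<noteq> 0" unfolding brk_def by fastforce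
    then show "Pr (deg_add da db) j S"
    proof cases
      case 1 then show ?thesis using supP_comp[OF la(1) la(3) lb(1) la(4) lb(4)] by blast
    next
      case 2 then show ?thesis using supP_comp[OF lb(1) lb(3) la(1) lb(4) la(4)] by blast
    qed
  qed
  show ?thesis unfolding sb_brk Inv_def
    using lin_brk[OF la(1) lb(1)] parm_brk[OF la(1) lb(1) la(2) lb(2)] leib_brk[OF la(1) lb(1) la(2) lb(2) la(3) lb(3)] s
    by blast
qed

lemma Inv_sq:
  assumes a: "Inv a d True"
  shows "Inv (\<lambda>f. a (a f)) (deg_add d d) False"
proof -
  have la: "lin a" "parm a True" "leib a True" "supP a d" using a unfolding Inv_def by auto
  have s: "supP (\<lambda>f. a (a f)) (deg_add d d)"
    unfolding supP_def using supP_comp[OF la(1) la(3) la(1) la(4) la(4)] by blast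
  have p: "parm (\<lambda>f. a (a f)) (True \<noteq> True)" by (rule parm_comp[OF la(1) la(2) la(2)])
  show ?thesis unfolding Inv_def using lin_comp[OF la(1) la(1)] p leib_sq[OF la(1) la(2) la(3)] s by simp
qed

lemma Inv_lie: "(a, n, p) \<in> lie_prod \<Longrightarrow> Inv a n p"
proof (induction rule: lie_prod.induct)
  case (gen i) then show ?case by (rule Inv_gen)
next
  case (brk a da pa b db pb) then show ?case using Inv_brk by blast
next
  case (sq a d) then show ?case using Inv_sq by blast
qed

lemma Qcomp_lie: "x \<in> Qcomp n \<Longrightarrow> x f \<noteq> (\<lambda>T. 0) \<Longrightarrow> \<exists>a p. (a, n, p) \<in> lie_prod \<and> a f \<noteq> (\<lambda>T. 0)"
proof (induction rule: Qcomp.induct)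
  case zero then show ?case by simp
next
  case (prod a p) then show ?case by blast
next
  case (add a b)
  then have "a f \<noteq> (\<lambda>T. 0) \<or> b f \<noteq> (\<lambda>T. 0)" by fastforce
  then show ?case using add by blast
next
  case (smult a c)
  then have "a f \<noteq> (\<lambda>T. 0)" by fastforce
  then show ?case using smult by blast
qed

lemma main_struct:
  assumes "Qcomp_nonzero TYPE('k::field) n"
  shows "\<exists>k S. Pr n k S"
proof -
  obtain x f where x: "x \<in> (Qcomp n :: 'k gop set)" "f \<in> Lambda" "x f \<noteq> (\<lambda>T. 0)"
    using assms unfolding Qcomp_nonzero_def by blast
  obtain a p where a: "(a, n, p) \<in> lie_prod" "a f \<noteq> (\<lambda>T. 0)" using Qcomp_lie[OF x(1) x(3)] by blast
  have I: "Inv a n p" by (rule Inv_lie[OF a(1)])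
  have l: "lin a" "leib a p" using I unfolding Inv_def by auto
  obtain j S where "a (dl {j}) S \<noteq> 0" using leib_nonzero[OF l x(2) a(2)] by blast
  then show ?thesis using I unfolding Inv_def supP_def by blast
qed



lemma geo:
  fixes x :: real
  assumes x: "x > 1" and X: "X \<subseteq> {..<m - d}"
  shows "(\<Sum>i\<in>X. x^i) \<le> x^m / (x^d * (x - 1))"
proof (cases "d \<le> m")
  case False
  then have "X = {}" using X by auto
  then show ?thesis using x by simp
next
  case True
  have "(\<Sum>i\<in>X. x^i) \<le> (\<Sum>i\<in>{..<m - d}. x^i)"
    using X x by (intro sum_mono2) auto
  also have "\<dots> = (x^(m - d) - 1) / (x - 1)"
    using x by (simp add: sum_gp_strict field_simps)
  also have "\<dots> \<le> x^(m - d) / (x - 1)" using x by (simp add: divide_right_mono)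
  also have "x^(m - d) = x^m / x^d" using True x by (simp add: power_diff)
  finally show ?thesis by simp
qed

lemma gx_cases: "gx m X \<Longrightarrow> X \<subseteq> {..<m - 2} \<or> (2 \<le> m \<and> m - 2 \<in> X \<and> X - {m - 2} \<subseteq> {..<m - 4})"
proof -
  assume g: "gx m X"
  have b: "\<And>x. x \<in> X \<Longrightarrow> x < m \<and> x + 1 \<noteq> m" using g unfolding gx_def by auto
  show ?thesis
  proof (cases "2 \<le> m \<and> m - 2 \<in> X")
    case True
    have "X - {m - 2} \<subseteq> {..<m - 4}"
    proof
      fix x assume x: "x \<in> X - {m - 2}"
      have "x + 3 \<noteq> m"
      proof
        assume "x + 3 = m"
        then have "x \<in> X \<and> x + 1 \<in> X \<and> x + 3 = m" using True x by (auto simp: numeral_eq_Suc)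
        then show False using g unfolding gx_def by blast
      qed
      moreover have "x + 4 \<noteq> m"
      proof
        assume "x + 4 = m"
        then have "x \<in> X \<and> x + 2 \<in> X \<and> x + 4 = m" using True x by (auto simp: numeral_eq_Suc)
        then show False using g unfolding gx_def by blast
      qed
      moreover have "x < m" "x + 1 \<noteq> m" using b x by auto
      moreover have "x + 2 \<noteq> m" using x True by auto
      ultimately show "x \<in> {..<m - 4}" by simp
    qed
    then show ?thesis using True by blast
  next
    case False
    have "X \<subseteq> {..<m - 2}"
    proof
      fix x assume x: "x \<in> X"
      have "x < m" "x + 1 \<noteq> m" using b[OF x] by auto
      moreover have "2 \<le> m \<longrightarrow> x \<noteq> m - 2" using x False by auto
      ultimately show "x \<in> {..<m - 2}" by (simp; presburger)
    qed
    then show ?thesis by blast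
  qed
qed

definition rho :: real where "rho = cmod mu"

lemma rho_sq: "rho^2 = lam^2 - 1" unfolding rho_def by (rule cmod_mu_sq)

lemma lam_sq: "lam^2 \<ge> 23104/10000"
proof -
  have "lam^2 \<ge> (152/100)^2" using lam_facts(2) by (intro power_mono) auto
  then show ?thesis by (simp add: power2_eq_square)
qed

lemma rho_sq_ge: "rho^2 \<ge> 13104/10000" using rho_sq lam_sq by simp

lemma rho_ge: "rho \<ge> 11447/10000"
proof -
  have "(11447/10000::real)^2 \<le> rho^2" using rho_sq_ge by (simp add: power2_eq_square)
  moreover have "rho \<ge> 0" unfolding rho_def by simp
  ultimately show ?thesis by (metis abs_le_square_iff abs_of_nonneg zero_le_divide_iff zero_le_numeral)
qed

lemma lam_gt1: "lam > 1" using lam_facts(2) by simp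
lemma rho_gt1: "rho > 1" using rho_ge by simp

lemma lamY:
  assumes g: "gx m X"
  shows "(\<Sum>i\<in>X. lam^i) \<le> (84/100) * lam^m"
proof -
  have l: "lam \<ge> 152/100" "lam > 1" using lam_facts(2) by auto
  have p: "lam^m > 0" using l by simp
  have l2: "lam^2 * (lam - 1) \<ge> (23104/10000) * (52/100)"
    using lam_sq l by (intro mult_mono) auto
  from gx_cases[OF g] show ?thesis
  proof
    assume X: "X \<subseteq> {..<m - 2}"
    have "(\<Sum>i\<in>X. lam^i) \<le> lam^m / (lam^2 * (lam - 1))" by (rule geo[OF l(2) X])
    also have "\<dots> \<le> lam^m / ((23104/10000) * (52/100))"
      using l2 p by (intro divide_left_mono) auto
    also have "\<dots> \<le> (84/100) * lam^m" using p by simp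
    finally show ?thesis .
  next
    assume c: "2 \<le> m \<and> m - 2 \<in> X \<and> X - {m - 2} \<subseteq> {..<m - 4}"
    have fX: "finite X" using g unfolding gx_def by (meson finite_lessThan finite_subset)
    have s1: "(\<Sum>i\<in>X. lam^i) = lam^(m - 2) + (\<Sum>i\<in>X - {m - 2}. lam^i)"
      using c fX by (simp add: sum.remove)
    have s2: "lam^(m - 2) \<le> lam^m / (23104/10000)"
    proof -
      have "lam^(m - 2) = lam^m / lam^2" using c l by (simp add: power_diff)
      also have "\<dots> \<le> lam^m / (23104/10000)" using lam_sq p by (intro divide_left_mono) auto
      finally show ?thesis .
    qed
    have s3: "(\<Sum>i\<in>X - {m - 2}. lam^i) \<le> lam^m / ((23104/10000)^2 * (52/100))"
    proof -
      have "(\<Sum>i\<in>X - {m - 2}. lam^i) \<le> lam^m / (lam^4 * (lam - 1))" by (rule geo[OF l(2)]) (use c in auto)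
      moreover have "lam^4 * (lam - 1) \<ge> (23104/10000)^2 * (52/100)"
      proof -
        have "lam^4 = (lam^2)^2" by simp
        moreover have "(lam^2)^2 \<ge> (23104/10000)^2" using lam_sq by (intro power_mono) auto
        ultimately show ?thesis using l by (intro mult_mono) auto
      qed
      moreover have "0 < lam^4 * (lam - 1)" using l by simp
      ultimately show ?thesis using p by (meson divide_left_mono order_trans less_imp_le mult_pos_pos zero_less_numeral
          zero_less_divide_iff zero_less_power)
    qed
    have "(\<Sum>i\<in>X. lam^i) \<le> lam^m / (23104/10000) + lam^m / ((23104/10000)^2 * (52/100))"
      using s1 s2 s3 by linarith
    also have "\<dots> \<le> (84/100) * lam^m" using p by (simp add: power2_eq_square)
    finally show ?thesis .
  qed
qed

lemma rhoZ:
  assumes g: "gx m X"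
  shows "(\<Sum>i\<in>X. rho^i) \<le> (53/10) * rho^m"
proof -
  have l: "rho \<ge> 11447/10000" "rho > 1" using rho_ge by auto
  have p: "rho^m > 0" using l by simp
  have l2: "rho^2 * (rho - 1) \<ge> (13104/10000) * (1447/10000)"
    using rho_sq_ge l by (intro mult_mono) auto
  from gx_cases[OF g] show ?thesis
  proof
    assume X: "X \<subseteq> {..<m - 2}"
    have "(\<Sum>i\<in>X. rho^i) \<le> rho^m / (rho^2 * (rho - 1))" by (rule geo[OF l(2) X])
    also have "\<dots> \<le> rho^m / ((13104/10000) * (1447/10000))"
      using l2 p by (intro divide_left_mono) auto
    also have "\<dots> \<le> (53/10) * rho^m" using p by simp
    finally show ?thesis .
  next
    assume c: "2 \<le> m \<and> m - 2 \<in> X \<and> X - {m - 2} \<subseteq> {..<m - 4}"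
    have fX: "finite X" using g unfolding gx_def by (meson finite_lessThan finite_subset)
    have s1: "(\<Sum>i\<in>X. rho^i) = rho^(m - 2) + (\<Sum>i\<in>X - {m - 2}. rho^i)"
      using c fX by (simp add: sum.remove)
    have s2: "rho^(m - 2) \<le> rho^m / (13104/10000)"
    proof -
      have "rho^(m - 2) = rho^m / rho^2" using c l by (simp add: power_diff)
      also have "\<dots> \<le> rho^m / (13104/10000)" using rho_sq_ge p by (intro divide_left_mono) auto
      finally show ?thesis .
    qed
    have s3: "(\<Sum>i\<in>X - {m - 2}. rho^i) \<le> rho^m / ((13104/10000)^2 * (1447/10000))"
    proof -
      have "(\<Sum>i\<in>X - {m - 2}. rho^i) \<le> rho^m / (rho^4 * (rho - 1))" by (rule geo[OF l(2)]) (use c in auto)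
      moreover have "rho^4 * (rho - 1) \<ge> (13104/10000)^2 * (1447/10000)"
      proof -
        have "rho^4 = (rho^2)^2" by simp
        moreover have "(rho^2)^2 \<ge> (13104/10000)^2" using rho_sq_ge by (intro power_mono) auto
        ultimately show ?thesis using l by (intro mult_mono) auto
      qed
      moreover have "0 < rho^4 * (rho - 1)" using l by simp
      ultimately show ?thesis using p by (meson divide_left_mono order_trans less_imp_le mult_pos_pos zero_less_numeral
          zero_less_divide_iff zero_less_power)
    qed
    have "(\<Sum>i\<in>X. rho^i) \<le> rho^m / (13104/10000) + rho^m / ((13104/10000)^2 * (1447/10000))"
      using s1 s2 s3 by linarith
    also have "\<dots> \<le> (53/10) * rho^m" using p by (simp add: power2_eq_square)
    finally show ?thesis .
  qed
qed



lemma wt_Good: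
  assumes "x^3 = x + 2" "k = m + 3*r" "S = X \<union> tls m r" "gx m X"
  shows "wt x k S = x^m - (\<Sum>i\<in>X. x^i)"
proof -
  have fX: "finite X" using assms(4) unfolding gx_def by (meson finite_lessThan finite_subset)
  have d: "X \<inter> tls m r = {}" using assms(4) unfolding gx_def by (auto simp: tls_mem)
  have "(\<Sum>i\<in>S. x^i) = (\<Sum>i\<in>X. x^i) + (\<Sum>i\<in>tls m r. x^i)"
    unfolding assms(3) using fX tls_finite d by (intro sum.union_disjoint) auto
  then show ?thesis unfolding wt_def assms(2) using tail_id[OF assms(1), of m r] by (simp add: algebra_simps)
qed

lemma Pr_bound:
  assumes "Pr n k S"
  shows "\<exists>m. ev lam n \<ge> (16/100) * lam^m \<and> cmod (ev mu n) \<le> (63/10) * rho^m"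
proof -
  obtain m r X where k: "k = m + 3*r" and S: "S = X \<union> tls m r" and g: "gx m X"
    using assms unfolding Pr_def Good_def by blast
  have el: "ev lam n = lam^m - (\<Sum>i\<in>X. lam^i)"
    using assms wt_Good[OF lam_facts(1) k S g] unfolding Pr_def by simp
  have em: "ev mu n = mu^m - (\<Sum>i\<in>X. mu^i)"
    using assms wt_Good[OF mu_root k S g] unfolding Pr_def by simp
  have "ev lam n \<ge> (16/100) * lam^m" unfolding el using lamY[OF g] by simp
  moreover have "cmod (ev mu n) \<le> (63/10) * rho^m"
  proof -
    have "cmod (ev mu n) \<le> cmod (mu^m) + cmod (\<Sum>i\<in>X. mu^i)" unfolding em by (rule norm_triangle_ineq4)
    also have "cmod (\<Sum>i\<in>X. mu^i) \<le> (\<Sum>i\<in>X. cmod (mu^i))" by (rule norm_sum)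
    also have "(\<Sum>i\<in>X. cmod (mu^i)) = (\<Sum>i\<in>X. rho^i)" unfolding rho_def by (simp add: norm_power)
    also have "cmod (mu^m) = rho^m" unfolding rho_def by (simp add: norm_power)
    finally show ?thesis using rhoZ[OF g] by simp
  qed
  ultimately show ?thesis by blast
qed

lemma sig: "1 / sigma = ln rho / ln lam"
  unfolding sigma_def log_def rho_def by simp

lemma lam_powr: "lam powr (1 / sigma) = rho"
proof -
  have "ln lam > 0" using lam_gt1 by simp
  moreover have "rho > 0" using rho_gt1 by simp
  ultimately show ?thesis unfolding sig powr_def using lam_gt1 by simp
qed

lemma sig_le: "1 / sigma \<le> 1 / 3" "1 / sigma > 0"
proof -
  have l5: "lam^5 \<ge> 8"
  proof -
    have "lam^5 = lam + 2 + 2 * lam^2" using lam_facts(1) by (simp add: algebra_simps power2_eq_square power3_eq_cube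
        numeral_eq_Suc)
    then show ?thesis using lam_sq lam_facts(2) by simp
  qed
  have r6: "(rho^3)^2 \<le> lam^2"
  proof -
    have "(rho^3)^2 = (rho^2)^3" unfolding power_mult[symmetric] by (simp add: mult.commute)
    then have "(rho^3)^2 = (lam^2 - 1)^3" using rho_sq by simp
    moreover have "(lam^2 - 1)^3 * lam^3 = 8"
    proof -
      have "(lam^2 - 1)^3 * lam^3 = (lam * (lam^2 - 1))^3" by (simp add: power_mult_distrib mult.commute)
      also have "\<dots> = 8" using lam_sq_rel by simp
      finally show ?thesis .
    qed
    moreover have "lam^3 > 0" using lam_gt1 by simp
    ultimately have "(rho^3)^2 * lam^3 = 8" by simp
    also have "8 \<le> lam^2 * lam^3" using l5 by (simp add: power_add[symmetric])
    finally show ?thesis using \<open>lam^3 > 0\<close> by (rule mult_right_le_imp_le)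
  qed
  have "rho^3 \<le> lam" by (rule power2_le_imp_le[OF r6]) (use lam_gt1 in simp)
  moreover have "rho^3 > 0" using rho_gt1 by simp
  ultimately have "ln (rho^3) \<le> ln lam" by (rule ln_mono)
  then have "3 * ln rho \<le> ln lam" using rho_gt1 by (simp add: ln_realpow)
  moreover have "ln lam > 0" using lam_gt1 by simp
  moreover have "ln rho > 0" using rho_gt1 by simp
  ultimately show "1 / sigma \<le> 1 / 3" "1 / sigma > 0" unfolding sig by (simp_all add: field_simps)
qed

lemma final_bound:
  assumes "Pr n k S"
  shows "cmod (ev mu n) < 14 * (ev lam n) powr (1 / sigma)"
proof -
  obtain m where m: "ev lam n \<ge> (16/100) * lam^m" "cmod (ev mu n) \<le> (63/10) * rho^m" using Pr_bound[OF assms] by blast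
  have rp: "rho^m > 0" using rho_gt1 by simp
  have c3: "(16/100::real) powr (1/3) > 45/100"
  proof (rule ccontr)
    assume "\<not> (16/100::real) powr (1/3) > 45/100"
    then have "((16/100::real) powr (1/3))^3 \<le> (45/100)^3" by (intro power_mono) auto
    moreover have "((16/100::real) powr (1/3))^3 = 16/100"
      by (simp add: powr_realpow[symmetric] powr_powr)
    moreover have "(45/100::real)^3 = 91125/1000000" by (simp add: power3_eq_cube)
    ultimately show False by linarith
  qed
  have c4: "(16/100::real) powr (1/3) \<le> (16/100) powr (1 / sigma)"
    using sig_le by (intro powr_mono') auto
  have "cmod (ev mu n) \<le> (63/10) * rho^m" by (rule m(2))
  also have "\<dots> < 14 * ((16/100) powr (1/3) * rho^m)" using c3 rp by simp
  also have "\<dots> \<le> 14 * ((16/100) powr (1/sigma) * rho^m)" using c4 rp by simp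
  also have "(16/100) powr (1/sigma) * rho^m = ((16/100) * lam^m) powr (1 / sigma)"
  proof -
    have "(lam^m) powr (1/sigma) = rho^m"
      using lam_gt1 by (simp add: powr_realpow[symmetric] powr_powr lam_powr[symmetric] mult.commute)
    moreover have "((16/100) * lam^m) powr (1/sigma) = (16/100) powr (1/sigma) * (lam^m) powr (1/sigma)"
      by (rule powr_mult)
    ultimately show ?thesis by simp
  qed
  also have "14 * (((16/100) * lam^m) powr (1 / sigma)) \<le> 14 * (ev lam n) powr (1 / sigma)"
    using m(1) sig_le lam_gt1 by (simp add: powr_mono2)
  finally show ?thesis .
qed



theorem theorem8p5:
  fixes n1 n2 n3 :: nat
  assumes "Qcomp_nonzero TYPE('k::field) (n1, n2, n3)"
  shows "sqrt ((Re (of_nat n1 + of_nat n2 * mu + of_nat n3 * mu ^ 2))\<^sup>2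
             + (Im (of_nat n1 + of_nat n2 * mu + of_nat n3 * mu ^ 2))\<^sup>2)
         < 14 * (real n1 + real n2 * lam + real n3 * lam ^ 2) powr (1 / sigma)"
proof -
  obtain k S where "Pr (n1, n2, n3) k S" using main_struct[OF assms] by blast
  then have "cmod (ev mu (n1, n2, n3)) < 14 * (ev lam (n1, n2, n3)) powr (1 / sigma)" by (rule final_bound)
  then show ?thesis unfolding ev_def norm_complex_def by simp
qed

end
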